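(* Let $0<r\le1$ and $0<\alpha\le\frac12$. Let $a:\mathbb{Z}^n\to\mathbb{C}$ satisfy $|a(\xi)|\le C\langle\xi\rangle^m$ for all $\xi\in\mathbb{Z}^n$. Assume $1<p_1\le2$, $q_1=(\alpha+\frac1{p_1'})^{-1}$, and $m<-\frac nr-\alpha n$. Then the Fourier multiplier $T_a$ is $r$-nuclear on $B^w_{p_1,q_1}(\mathbb{T}^n)$ for every $w\in\mathbb{R}$, and its nuclear trace is $\mathrm{Tr}(T_a)=\sum_{\xi\in\mathbb{Z}^n}a(\xi)$.
   Context: $\widehat f(\xi)=\int_{\mathbb{T}^n}e^{-i2\pi x\cdot\xi}f(x)dx$, $\langle\xi\rangle=(1+|\xi|^2)^{1/2}$. $T_au(x)=\sum_{\xi\in\mathbb{Z}^n}e^{i2\pi x\cdot\xi}a(\xi)\widehat u(\xi)$. Periodic Besov spaces: $\|f\|_{B^w_{p,q}}=\big(\sum_{m\ge0}2^{mwq}\|\sum_{2^m\le|\xi|<2^{m+1}}e^{i2\pi x\cdot\xi}\widehat f(\xi)\|^q_{L^p(\mathbb{T}^n)}\big)^{1/q}$. $p'$ is the conjugate exponent. $T:E\to E$ is $r$-nuclear if $T=\sum_ne'_n(\cdot)y_n$ with $\sum_n\|e'_n\|^r_{E'}\|y_n\|^r_E<\infty$; on a space with the approximation property its nuclear trace is $\sum_ne'_n(y_n)$. *)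

theory Defs
  imports "HOL-Analysis.Analysis"
begin

text \<open>Lattice points xi in Z^n are modelled as int^'n (n = CARD('n)); points of the
torus T^n are represented by the unit cube [0,1]^n in real^'n.  A (periodic) distribution
is identified with its Fourier coefficient function  int^'n => complex.\<close>

definition zabs :: "int^'n \<Rightarrow> real" where
  "zabs \<xi> = sqrt (\<Sum>i\<in>UNIV. (real_of_int (\<xi>$i))\<^sup>2)"

definition jbr :: "int^'n \<Rightarrow> real" where
  "jbr \<xi> = sqrt (1 + (zabs \<xi>)\<^sup>2)"

definition zdot :: "real^'n \<Rightarrow> int^'n \<Rightarrow> real" where
  "zdot x \<xi> = (\<Sum>i\<in>UNIV. x$i * real_of_int (\<xi>$i))"

definition unit_cube :: "(real^'n) set" where
  "unit_cube = {x. \<forall>i. 0 \<le> x$i \<and> x$i \<le> 1}"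

definition shell :: "nat \<Rightarrow> (int^'n) set" where
  "shell k = {\<xi>. (if k = 0 then True else 2 ^ k \<le> zabs \<xi>) \<and> zabs \<xi> < 2 ^ (k + 1)}"

definition block :: "(int^'n \<Rightarrow> complex) \<Rightarrow> nat \<Rightarrow> real^'n \<Rightarrow> complex" where
  "block f k x = (\<Sum>\<xi>\<in>shell k. exp (\<i> * complex_of_real (2 * pi * zdot x \<xi>)) * f \<xi>)"

definition Lp_norm_torus :: "real \<Rightarrow> (real^'n \<Rightarrow> complex) \<Rightarrow> real" where
  "Lp_norm_torus p g = (integral unit_cube (\<lambda>x. norm (g x) powr p)) powr (1 / p)"

definition besov_term :: "real \<Rightarrow> real \<Rightarrow> real \<Rightarrow> (int^'n \<Rightarrow> complex) \<Rightarrow> nat \<Rightarrow> real" where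
  "besov_term w p q f k = (2 powr (real k * w * q)) * (Lp_norm_torus p (block f k)) powr q"

definition besov_space :: "real \<Rightarrow> real \<Rightarrow> real \<Rightarrow> (int^'n \<Rightarrow> complex) set" where
  "besov_space w p q = {f. summable (besov_term w p q f)}"

definition besov_norm :: "real \<Rightarrow> real \<Rightarrow> real \<Rightarrow> (int^'n \<Rightarrow> complex) \<Rightarrow> real" where
  "besov_norm w p q f = (suminf (besov_term w p q f)) powr (1 / q)"

definition dual_space :: "('a \<Rightarrow> complex) set \<Rightarrow> (('a \<Rightarrow> complex) \<Rightarrow> real)
    \<Rightarrow> ((('a \<Rightarrow> complex) \<Rightarrow> complex) set)" where
  "dual_space E N = {e. (\<forall>u\<in>E. \<forall>v\<in>E. e (\<lambda>t. u t + v t) = e u + e v)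
       \<and> (\<forall>u\<in>E. \<forall>c. e (\<lambda>t. c * u t) = c * e u)
       \<and> (\<exists>B. \<forall>u\<in>E. norm (e u) \<le> B * N u)}"

definition dual_norm :: "('a \<Rightarrow> complex) set \<Rightarrow> (('a \<Rightarrow> complex) \<Rightarrow> real)
    \<Rightarrow> (('a \<Rightarrow> complex) \<Rightarrow> complex) \<Rightarrow> real" where
  "dual_norm E N e = Sup {norm (e u) | u. u \<in> E \<and> N u \<le> 1}"

definition nuclear_rep :: "real \<Rightarrow> ('a \<Rightarrow> complex) set \<Rightarrow> (('a \<Rightarrow> complex) \<Rightarrow> real)
    \<Rightarrow> (('a \<Rightarrow> complex) \<Rightarrow> ('a \<Rightarrow> complex))
    \<Rightarrow> (nat \<Rightarrow> ('a \<Rightarrow> complex) \<Rightarrow> complex) \<Rightarrow> (nat \<Rightarrow> ('a \<Rightarrow> complex)) \<Rightarrow> bool" where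
  "nuclear_rep r E N T e y \<longleftrightarrow>
     (\<forall>k. e k \<in> dual_space E N) \<and> (\<forall>k. y k \<in> E)
     \<and> summable (\<lambda>k. (dual_norm E N (e k)) powr r * (N (y k)) powr r)
     \<and> (\<forall>u\<in>E. T u \<in> E \<and>
          (\<lambda>K. N (\<lambda>t. T u t - (\<Sum>k<K. e k u * y k t))) \<longlonglongrightarrow> 0)"

definition r_nuclear :: "real \<Rightarrow> ('a \<Rightarrow> complex) set \<Rightarrow> (('a \<Rightarrow> complex) \<Rightarrow> real)
    \<Rightarrow> (('a \<Rightarrow> complex) \<Rightarrow> ('a \<Rightarrow> complex)) \<Rightarrow> bool" where
  "r_nuclear r E N T \<longleftrightarrow> (\<exists>e y. nuclear_rep r E N T e y)"

definition fourier_mult :: "(int^'n \<Rightarrow> complex) \<Rightarrow> (int^'n \<Rightarrow> complex) \<Rightarrow> (int^'n \<Rightarrow> complex)" where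
  "fourier_mult a u = (\<lambda>\<xi>. a \<xi> * u \<xi>)"

end

theory Submission
  imports Defs
begin


interpretation lbprod: product_sigma_finite "\<lambda>_::'a::euclidean_space. lborel :: real measure"
  by standard

lemma integral_lborel_prod:
  fixes h :: "'a::euclidean_space \<Rightarrow> real \<Rightarrow> complex"
  assumes int: "\<And>b. b \<in> Basis \<Longrightarrow> integrable lborel (h b)"
  shows "integrable lborel (\<lambda>x::'a. \<Prod>b\<in>Basis. h b (x \<bullet> b))"
    "(\<integral>x. (\<Prod>b\<in>Basis. h b (x \<bullet> b)) \<partial>lborel) = (\<Prod>b\<in>Basis. integral\<^sup>L lborel (h b))"
proof -
  have meas[measurable]: "\<And>b. b \<in> Basis \<Longrightarrow> h b \<in> borel_measurable borel"
    using int by (simp add: borel_measurable_integrable)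
  have eq: "\<And>f. f \<in> space (\<Pi>\<^sub>M b\<in>Basis. lborel) \<Longrightarrow>
      (\<Prod>b\<in>Basis. h b ((\<Sum>c\<in>Basis. f c *\<^sub>R c) \<bullet> b)) = (\<Prod>b\<in>Basis. h b (f b))"
    by (intro prod.cong refl) (simp add: inner_sum_left inner_Basis if_distrib sum.delta cong: if_cong)
  have m2: "(\<lambda>x::'a. \<Prod>b\<in>Basis. h b (x \<bullet> b)) \<in> borel_measurable borel"
    by measurable
  have mm: "(\<lambda>f. \<Sum>b\<in>Basis. f b *\<^sub>R b) \<in> measurable (\<Pi>\<^sub>M b\<in>Basis. (lborel::real measure)) (borel :: 'a measure)"
    by measurable
  have I1: "integrable (\<Pi>\<^sub>M b\<in>Basis. lborel) (\<lambda>f. \<Prod>b\<in>Basis. h b (f b))"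
    by (rule lbprod.product_integrable_prod) (auto intro: int)
  have I2: "integrable (\<Pi>\<^sub>M b\<in>Basis. lborel) (\<lambda>f. \<Prod>b\<in>Basis. h b ((\<Sum>c\<in>Basis. f c *\<^sub>R c) \<bullet> b))"
    by (rule Bochner_Integration.integrable_cong[THEN iffD1, OF refl _ I1]) (simp add: eq)
  show "integrable lborel (\<lambda>x::'a. \<Prod>b\<in>Basis. h b (x \<bullet> b))"
    apply (subst lborel_eq)
    apply (subst integrable_distr_eq[OF mm m2])
    using I2 by simp
  have "(\<integral>x. (\<Prod>b\<in>Basis. h b (x \<bullet> b)) \<partial>lborel) =
      (\<integral>f. (\<Prod>b\<in>Basis. h b ((\<Sum>c\<in>Basis. f c *\<^sub>R c) \<bullet> b)) \<partial>(\<Pi>\<^sub>M b\<in>Basis. lborel))"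
    apply (subst lborel_eq)
    apply (subst integral_distr[OF mm m2])
    by simp
  also have "\<dots> = (\<integral>f. (\<Prod>b\<in>Basis. h b (f b)) \<partial>(\<Pi>\<^sub>M b\<in>Basis. lborel))"
    by (rule Bochner_Integration.integral_cong) (auto simp: eq)
  also have "\<dots> = (\<Prod>b\<in>Basis. integral\<^sup>L lborel (h b))"
    by (rule lbprod.product_integral_prod) (auto intro: int)
  finally show "(\<integral>x. (\<Prod>b\<in>Basis. h b (x \<bullet> b)) \<partial>lborel) = (\<Prod>b\<in>Basis. integral\<^sup>L lborel (h b))" .
qed



lemma integral_exp01:
  assumes "a \<noteq> 0"
  shows "integral {0..1} (\<lambda>t. exp(a * complex_of_real t)) = (exp a - 1) / a"
proof -
  have "\<And>t. t \<in> {0..1} \<Longrightarrow> ((\<lambda>x. exp (a * x) / a) has_vector_derivative exp (a * t)) (at t within {0..1})"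
    using assms
    by (intro derivative_eq_intros has_complex_derivative_imp_has_vector_derivative [unfolded o_def] | simp)+
  then have "((\<lambda>t. exp(a * of_real t)) has_integral exp(a * complex_of_real 1)/a - exp(a * of_real 0)/a)  {0..1}"
    by (intro fundamental_theorem_of_calculus) auto
  then show ?thesis
    by (simp add: diff_divide_distrib integral_unique)
qed

lemma lborel_exp1d:
  fixes c :: real
  assumes "c \<in> \<int>"
  defines "g \<equiv> (\<lambda>t::real. indicator {0..1} t *\<^sub>R exp ((2 * pi * c * \<i>) * complex_of_real t))"
  shows "integrable lborel g" "integral\<^sup>L lborel g = (if c = 0 then 1 else 0)"
proof -
  have si: "set_integrable lborel {0..1::real} (\<lambda>t. exp ((2 * pi * c * \<i>) * complex_of_real t))"
    unfolding set_integrable_def by (intro borel_integrable_compact continuous_intros) auto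
  then show "integrable lborel g" unfolding g_def set_integrable_def .
  have "integral\<^sup>L lborel g = integral {0..1} (\<lambda>t. exp ((2 * pi * c * \<i>) * complex_of_real t))"
    using set_borel_integral_eq_integral(2)[OF si] unfolding g_def set_lebesgue_integral_def by simp
  also have "\<dots> = (if c = 0 then 1 else 0)"
  proof (cases "c = 0")
    case True then show ?thesis by simp
  next
    case False
    then have ne: "2 * pi * c * \<i> \<noteq> 0" by simp
    have "exp (2 * pi * c * \<i>) = 1"
      using exp_integer_2pi[of "of_real c"] assms by (simp add: mult_ac)
    then show ?thesis using integral_exp01[OF ne] False by simp
  qed
  finally show "integral\<^sup>L lborel g = (if c = 0 then 1 else 0)" .
qed

lemma Basis_vec_range: "(Basis :: (real^'n) set) = range (\<lambda>i. axis i 1)"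
  by (auto simp: Basis_vec_def)

lemma prod_Basis_vec: "(\<Prod>b\<in>(Basis::(real^'n) set). f b) = (\<Prod>i\<in>UNIV. f (axis i 1))"
proof -
  have "inj (\<lambda>i::'n. axis i (1::real))" by (auto intro!: injI simp: axis_eq_axis)
  then show ?thesis unfolding Basis_vec_range by (simp add: prod.reindex)
qed

lemma unit_cube_cbox: "unit_cube = cbox (0::real^'n) 1"
  by (auto simp: unit_cube_def mem_box_cart)

lemma zdot_inner: "zdot x \<xi> = x \<bullet> (\<chi> i. real_of_int (\<xi> $ i))"
  by (simp add: zdot_def inner_vec_def)

lemma orth:
  fixes \<eta> :: "int^'n"
  shows "((\<lambda>x. exp (\<i> * complex_of_real (2 * pi * zdot x \<eta>))) has_integral (if \<eta> = 0 then 1 else 0)) unit_cube"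
proof -
  define v :: "real^'n" where "v = (\<chi> i. real_of_int (\<eta> $ i))"
  define h where "h = (\<lambda>b::real^'n. \<lambda>t::real. indicator {0..1} t *\<^sub>R exp ((2 * pi * (v \<bullet> b) * \<i>) * complex_of_real t))"
  have vb: "\<And>b. b \<in> Basis \<Longrightarrow> v \<bullet> b \<in> \<int>"
    by (auto simp: Basis_vec_def v_def inner_axis)
  have int: "\<And>b. b \<in> Basis \<Longrightarrow> integrable lborel (h b)"
    unfolding h_def by (rule lborel_exp1d(1)[OF vb])
  have eqG: "(\<Prod>b\<in>Basis. h b (x \<bullet> b)) = indicator (cbox 0 1) x *\<^sub>R exp (\<i> * complex_of_real (2 * pi * zdot x \<eta>))" for x
  proof -
    have "(\<Prod>b\<in>Basis. h b (x \<bullet> b)) = (\<Prod>b\<in>Basis. complex_of_real (indicator {0..1} (x \<bullet> b))) *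
       (\<Prod>b\<in>Basis. exp ((2 * pi * (v \<bullet> b) * \<i>) * complex_of_real (x \<bullet> b)))"
      by (simp add: h_def prod.distrib scaleR_conv_of_real)
    also have "(\<Prod>b\<in>Basis. complex_of_real (indicator {0..1} (x \<bullet> b))) = indicator (cbox 0 1) x"
      by (auto simp: indicator_def mem_box_cart prod_Basis_vec inner_axis prod_zero_iff)
    also have "(\<Prod>b\<in>Basis. exp ((2 * pi * (v \<bullet> b) * \<i>) * complex_of_real (x \<bullet> b))) =
        exp (\<Sum>b\<in>Basis. (2 * pi * (v \<bullet> b) * \<i>) * complex_of_real (x \<bullet> b))"
      by (simp add: exp_sum)
    also have "(\<Sum>b\<in>Basis. (2 * pi * (v \<bullet> b) * \<i>) * complex_of_real (x \<bullet> b)) = \<i> * complex_of_real (2 * pi * (\<Sum>b\<in>Basis. (x \<bullet> b) * (v \<bullet> b)))"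
      by (simp add: sum_distrib_left mult_ac)
    also have "(\<Sum>b\<in>Basis. (x \<bullet> b) * (v \<bullet> b)) = zdot x \<eta>"
      by (simp add: euclidean_inner[symmetric] zdot_inner v_def)
    finally show ?thesis by (simp add: indicator_def scaleR_conv_of_real)
  qed
  have I: "integrable lborel (\<lambda>x::real^'n. \<Prod>b\<in>Basis. h b (x \<bullet> b))"
    by (rule integral_lborel_prod(1)[OF int])
  have V: "(\<integral>x. (\<Prod>b\<in>Basis. h b (x \<bullet> b)) \<partial>lborel) = (if \<eta> = 0 then 1 else 0)"
  proof -
    have "(\<integral>x. (\<Prod>b\<in>Basis. h b (x \<bullet> b)) \<partial>lborel) = (\<Prod>b\<in>Basis. integral\<^sup>L lborel (h b))"
      by (rule integral_lborel_prod(2)[OF int])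
    also have "\<dots> = (\<Prod>b\<in>Basis. (if v \<bullet> b = 0 then 1 else 0))"
      by (intro prod.cong refl, unfold h_def, rule lborel_exp1d(2)[OF vb])
    also have "\<dots> = (if \<eta> = 0 then 1 else 0)"
    proof -
      have "(\<forall>b\<in>Basis. v \<bullet> b = 0) \<longleftrightarrow> \<eta> = 0"
        by (auto simp: Basis_vec_def v_def inner_axis vec_eq_iff)
      then show ?thesis by (auto simp: prod_zero_iff)
    qed
    finally show ?thesis .
  qed
  have "((\<lambda>x. indicator (cbox 0 1) x *\<^sub>R exp (\<i> * complex_of_real (2 * pi * zdot x \<eta>))) has_integral (if \<eta> = 0 then 1 else 0)) UNIV"
    using has_integral_integral_lborel[OF I] V by (simp add: eqG)
  then have "((\<lambda>x. if x \<in> cbox 0 1 then exp (\<i> * complex_of_real (2 * pi * zdot x \<eta>)) else 0) has_integral (if \<eta> = 0 then 1 else 0)) UNIV"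
    by (rule has_integral_eq[rotated]) (auto simp: indicator_def)
  then show ?thesis
    unfolding unit_cube_cbox has_integral_restrict_UNIV .
qed



lemma content_unit_cube: "measure lborel (unit_cube :: (real^'n) set) = 1"
proof -
  have "(0::real^'n) \<in> cbox 0 1" by (simp add: mem_box_cart)
  then have "cbox (0::real^'n) 1 \<noteq> {}" by blast
  then show ?thesis unfolding unit_cube_cbox by (simp add: content_cbox_cart)
qed

lemma integral_const_cube: "integral (unit_cube :: (real^'n) set) (\<lambda>x. c) = (c::real)"
  using content_unit_cube[where 'n='n] unfolding unit_cube_cbox by simp

lemma compact_unit_cube: "compact (unit_cube :: (real^'n) set)"
  unfolding unit_cube_cbox by simp

lemma cont_int_cube: "continuous_on (unit_cube :: (real^'n) set) f \<Longrightarrow> (f::_\<Rightarrow>'b::banach) integrable_on unit_cube"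
  unfolding unit_cube_cbox by (rule integrable_continuous)

lemma cont_norm_powr:
  assumes "continuous_on S g" "p > 0"
  shows "continuous_on S (\<lambda>x. norm (g x :: 'b::real_normed_vector) powr p)"
  by (rule continuous_on_powr') (use assms in \<open>auto intro!: continuous_intros\<close>)

lemma L1_Lp_cube:
  fixes g :: "real^'n \<Rightarrow> complex"
  assumes cg: "continuous_on unit_cube g" and p: "p > 1"
  shows "integral unit_cube (\<lambda>x. norm (g x)) \<le> (integral unit_cube (\<lambda>x. norm (g x) powr p)) powr (1/p)"
proof -
  define q where "q = p / (p - 1)"
  have q1: "q > 1" and pq: "1/p + 1/q = 1" using p by (auto simp: q_def field_simps)
  define M where "M = integral unit_cube (\<lambda>x. norm (g x) powr p)"
  define J where "J = integral unit_cube (\<lambda>x. norm (g x))"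
  have ip: "(\<lambda>x. norm (g x) powr p) integrable_on unit_cube"
    by (intro cont_int_cube cont_norm_powr cg) (use p in auto)
  have i1: "(\<lambda>x. norm (g x)) integrable_on unit_cube"
    by (intro cont_int_cube continuous_intros cg)
  have M0: "M \<ge> 0" unfolding M_def by (rule integral_nonneg[OF ip]) auto
  have key: "J / l \<le> M / (p * l powr p) + 1/q" if l: "l > 0" for l
  proof -
    have "J / l = integral unit_cube (\<lambda>x. norm (g x) / l)"
      unfolding J_def by (simp add: divide_inverse integral_mult_left[symmetric] mult.commute)
    also have "\<dots> \<le> integral unit_cube (\<lambda>x. (norm (g x) powr p) / (p * l powr p) + 1/q)"
    proof (rule integral_le)
      show "(\<lambda>x. norm (g x) / l) integrable_on unit_cube"
        using i1 by (rule integrable_on_divide)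
      show "(\<lambda>x. norm (g x) powr p / (p * l powr p) + 1 / q) integrable_on unit_cube"
        by (intro integrable_add integrable_on_divide ip) (simp add: cont_int_cube)
      fix x
      have "(norm (g x) / l) * 1 \<le> (norm (g x) / l) powr p / p + 1 powr q / q"
        by (rule Youngs_inequality) (use p q1 pq l in auto)
      then show "norm (g x) / l \<le> norm (g x) powr p / (p * l powr p) + 1 / q"
        using l by (simp add: powr_divide mult.commute)
    qed
    also have "\<dots> = M / (p * l powr p) + 1/q"
    proof -
      have "integral unit_cube (\<lambda>x. (norm (g x) powr p) / (p * l powr p) + 1/q)
          = integral unit_cube (\<lambda>x. (norm (g x) powr p) / (p * l powr p)) + integral (unit_cube::(real^'n) set) (\<lambda>x. 1/q)"
        by (rule Henstock_Kurzweil_Integration.integral_add[OF integrable_on_divide[OF ip] cont_int_cube[OF continuous_on_const]])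
      then show ?thesis by (simp add: M_def integral_const_cube integral_divide)
    qed
    finally show ?thesis .
  qed
  show ?thesis
  proof (cases "M = 0")
    case True
    have "J \<le> 0"
    proof (rule field_le_epsilon)
      fix e :: real assume e: "e > 0"
      have "J / (e * q) \<le> 1/q" using key[of "e*q"] e q1 True by simp
      then show "J \<le> 0 + e" using e q1 by (simp add: field_simps)
    qed
    then show ?thesis using True by (simp add: J_def M_def)
  next
    case False
    then have Mp: "M > 0" using M0 by simp
    define l where "l = M powr (1/p)"
    have l: "l > 0" using Mp by (simp add: l_def)
    have "l powr p = M" using Mp p by (simp add: l_def powr_powr)
    then have "J / l \<le> 1/p + 1/q" using key[OF l] Mp p by simp
    then have "J / l \<le> 1" using pq by simp
    then show ?thesis using l by (simp add: J_def M_def l_def field_simps)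
  qed
qed



definition ee :: "real^'n \<Rightarrow> int^'n \<Rightarrow> complex" where
  "ee x \<xi> = exp (\<i> * complex_of_real (2 * pi * zdot x \<xi>))"

lemma block_ee: "block f k x = (\<Sum>\<xi>\<in>shell k. ee x \<xi> * f \<xi>)"
  by (simp add: block_def ee_def)

lemma norm_ee[simp]: "norm (ee x \<xi>) = 1"
  unfolding ee_def by (rule norm_exp_i_times)

lemma zdot_diff: "zdot x (\<eta> - \<xi>) = zdot x \<eta> - zdot x \<xi>"
  by (simp add: zdot_def algebra_simps sum_subtractf)

lemma ee_cnj: "ee x \<eta> * cnj (ee x \<xi>) = ee x (\<eta> - \<xi>)"
  by (simp add: ee_def exp_cnj zdot_diff exp_add[symmetric] algebra_simps)

lemma cont_zdot: "continuous_on S (\<lambda>x. zdot x \<xi>)"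
  unfolding zdot_def by (intro continuous_intros)

lemma cont_ee: "continuous_on S (\<lambda>x. ee x \<xi>)"
  unfolding ee_def by (intro continuous_intros cont_zdot)

lemma cont_block: "finite (shell k) \<Longrightarrow> continuous_on S (block f k)"
  unfolding block_ee by (intro continuous_intros cont_ee)

lemma zabs_nonneg: "zabs \<xi> \<ge> 0"
  by (simp add: zabs_def sum_nonneg)

lemma zabs_ge: "\<bar>real_of_int (\<xi> $ i)\<bar> \<le> zabs \<xi>"
proof -
  have "(real_of_int (\<xi> $ i))\<^sup>2 \<le> (\<Sum>j\<in>UNIV. (real_of_int (\<xi>$j))\<^sup>2)"
    by (rule member_le_sum) auto
  then have "sqrt ((real_of_int (\<xi> $ i))\<^sup>2) \<le> zabs \<xi>"
    unfolding zabs_def by (rule real_sqrt_le_mono)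
  then show ?thesis by simp
qed

lemma jbr_ge_zabs: "zabs \<xi> \<le> jbr \<xi>"
  unfolding jbr_def using zabs_nonneg[of \<xi>]
  by (metis add.commute le_add_same_cancel1 real_sqrt_le_mono real_sqrt_unique zero_le_one zero_le_power2)

lemma jbr_ge1: "1 \<le> jbr \<xi>"
  unfolding jbr_def by simp

lemma jbr_pos: "0 < jbr \<xi>"
  using jbr_ge1[of \<xi>] by simp

lemma box_eq: "{\<xi>::int^'n. \<forall>i. \<xi>$i \<in> S} = vec_lambda ` (PiE UNIV (\<lambda>_. S))"
proof (intro set_eqI iffI)
  fix \<xi> :: "int^'n" assume "\<xi> \<in> {\<xi>. \<forall>i. \<xi>$i \<in> S}"
  then have "(\<lambda>i. \<xi>$i) \<in> PiE UNIV (\<lambda>_. S)" by auto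
  moreover have "\<xi> = vec_lambda (\<lambda>i. \<xi>$i)" by simp
  ultimately show "\<xi> \<in> vec_lambda ` (PiE UNIV (\<lambda>_. S))" by blast
qed auto

lemma box_card:
  assumes "finite S"
  shows "finite {\<xi>::int^'n. \<forall>i. \<xi>$i \<in> S}" "card {\<xi>::int^'n. \<forall>i. \<xi>$i \<in> S} = card S ^ CARD('n)"
proof -
  have inj: "inj_on (vec_lambda :: ('n \<Rightarrow> int) \<Rightarrow> int^'n) (PiE UNIV (\<lambda>_. S))"
    by (rule inj_onI) (simp add: vec_lambda_inject)
  show "finite {\<xi>::int^'n. \<forall>i. \<xi>$i \<in> S}"
    unfolding box_eq using assms by (intro finite_imageI finite_PiE) auto
  show "card {\<xi>::int^'n. \<forall>i. \<xi>$i \<in> S} = card S ^ CARD('n)"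
    unfolding box_eq card_image[OF inj] using assms by (simp add: card_PiE)
qed

lemma ball_sub_box:
  "{\<xi>::int^'n. zabs \<xi> < R} \<subseteq> {\<xi>. \<forall>i. \<xi>$i \<in> {-\<lceil>R\<rceil>..\<lceil>R\<rceil>}}"
proof
  fix \<xi> :: "int^'n" assume "\<xi> \<in> {\<xi>. zabs \<xi> < R}"
  then have "\<bar>real_of_int (\<xi> $ i)\<bar> \<le> R" for i using zabs_ge[of \<xi> i] by simp
  then have A: "real_of_int \<bar>\<xi> $ i\<bar> \<le> R" for i by simp
  have "\<bar>\<xi> $ i\<bar> \<le> \<lceil>R\<rceil>" for i using A[of i] by (simp add: le_ceiling_iff)
  then show "\<xi> \<in> {\<xi>. \<forall>i. \<xi>$i \<in> {-\<lceil>R\<rceil>..\<lceil>R\<rceil>}}" by (simp add: abs_le_iff) (meson minus_le_iff)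
qed

lemma finite_ball: "finite {\<xi>::int^'n. zabs \<xi> < R}"
  by (rule finite_subset[OF ball_sub_box box_card(1)]) simp

lemma shell_sub: "shell k \<subseteq> {\<xi>::int^'n. zabs \<xi> < 2 ^ (k+1)}"
  by (auto simp: shell_def)

lemma finite_shell[simp]: "finite (shell k :: (int^'n) set)"
  by (rule finite_subset[OF shell_sub finite_ball])

lemma card_shell: "real (card (shell k :: (int^'n) set)) \<le> 8 ^ CARD('n) * 2 ^ (k * CARD('n))"
proof -
  define R :: int where "R = 2 ^ (k+1)"
  have "(2::real) ^ (k+1) = of_int (2 ^ (k+1))" by simp
  then have R: "\<lceil>(2::real) ^ (k+1)\<rceil> = R" unfolding R_def by (simp only: ceiling_of_int)
  have "card (shell k :: (int^'n) set) \<le> card {\<xi>::int^'n. \<forall>i. \<xi>$i \<in> {-R..R}}"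
    by (rule card_mono[OF box_card(1)]) (use shell_sub ball_sub_box R in \<open>fastforce+\<close>)
  also have "\<dots> = nat (2*R+1) ^ CARD('n)"
    by (subst box_card(2)) auto
  finally have "real (card (shell k :: (int^'n) set)) \<le> real (nat (2*R+1) ^ CARD('n))"
    by linarith
  also have "\<dots> = (2 * 2^(k+1) + 1) ^ CARD('n)"
    unfolding R_def by (simp add: nat_add_distrib nat_mult_distrib nat_power_eq add.commute)
  also have "\<dots> \<le> (8 * 2^k) ^ CARD('n)"
  proof (rule power_mono)
    have "(1::real) \<le> 2^k" by simp
    then show "2 * 2 ^ (k + 1) + 1 \<le> 8 * (2::real) ^ k" by (simp; linarith)
  qed simp
  also have "\<dots> = 8 ^ CARD('n) * 2 ^ (k * CARD('n))"
    by (simp add: power_mult_distrib power_mult)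
  finally show ?thesis .
qed

definition sidx :: "int^'n \<Rightarrow> nat" where
  "sidx \<xi> = (LEAST k. zabs \<xi> < 2 ^ (k+1))"

lemma sidx_ex: "\<exists>k::nat. zabs \<xi> < 2 ^ (k+1)"
proof -
  obtain k :: nat where "zabs \<xi> < real k" using reals_Archimedean2 by blast
  moreover have "real k < 2 ^ (k+1)"
  proof -
    have "k < 2 ^ k" by (rule less_exp)
    then have "real k < 2 ^ k" by (metis of_nat_less_iff of_nat_numeral of_nat_power)
    moreover have "(2::real)^(k+1) = 2 * 2^k" by simp
    moreover have "(2::real)^k \<ge> 0" by simp
    ultimately show ?thesis by linarith
  qed
  ultimately show ?thesis by (intro exI[of _ k]) simp
qed

lemma in_shell_sidx: "\<xi> \<in> shell (sidx \<xi>)"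
proof -
  have lt: "zabs \<xi> < 2 ^ (sidx \<xi> + 1)"
    unfolding sidx_def by (rule LeastI_ex[OF sidx_ex])
  have "2 ^ sidx \<xi> \<le> zabs \<xi>" if nz: "sidx \<xi> \<noteq> 0"
  proof -
    obtain j where j: "sidx \<xi> = j + 1" using nz by (cases "sidx \<xi>") auto
    have "\<not> zabs \<xi> < 2 ^ (j+1)"
    proof
      assume "zabs \<xi> < 2 ^ (j+1)"
      then have "sidx \<xi> \<le> j" unfolding sidx_def by (rule Least_le)
      then show False using j by simp
    qed
    then show ?thesis using j by simp
  qed
  then show ?thesis using lt by (auto simp: shell_def)
qed

lemma shell_disj: "\<xi> \<in> shell j \<Longrightarrow> \<xi> \<in> shell k \<Longrightarrow> j = k"
proof (rule ccontr)
  assume a: "\<xi> \<in> shell j" "\<xi> \<in> shell k" "j \<noteq> k"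
  have *: False if "\<xi> \<in> shell a" "\<xi> \<in> shell b" "a < b" for a b
  proof -
    have "zabs \<xi> < 2 ^ (a+1)" using that(1) by (simp add: shell_def)
    moreover have "2 ^ b \<le> zabs \<xi>" using that(2,3) by (simp add: shell_def)
    moreover have "(2::real) ^ (a+1) \<le> 2 ^ b" using that(3) by (intro power_increasing) auto
    ultimately show False by simp
  qed
  show False using a *[of j k] *[of k j] by (cases "j < k") auto
qed

lemma shell_iff: "\<xi> \<in> shell k \<longleftrightarrow> k = sidx \<xi>"
  using in_shell_sidx shell_disj by blast

lemma jbr_shell: "\<xi> \<in> shell k \<Longrightarrow> 2 ^ k \<le> jbr \<xi>"
  using jbr_ge_zabs[of \<xi>] jbr_ge1[of \<xi>] by (cases "k = 0") (auto simp: shell_def)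

lemma zabs_shell: "\<xi> \<in> shell k \<Longrightarrow> zabs \<xi> < 2 ^ (k+1)"
  by (simp add: shell_def)

lemma coef_integral:
  assumes "\<xi> \<in> shell k"
  shows "((\<lambda>x. block f k x * cnj (ee x \<xi>)) has_integral f \<xi>) unit_cube"
proof -
  have eq: "block f k x * cnj (ee x \<xi>) = (\<Sum>\<eta>\<in>shell k. f \<eta> * ee x (\<eta> - \<xi>))" for x
  proof -
    have "block f k x * cnj (ee x \<xi>) = (\<Sum>\<eta>\<in>shell k. (ee x \<eta> * f \<eta>) * cnj (ee x \<xi>))"
      by (simp add: block_ee sum_distrib_right)
    also have "\<dots> = (\<Sum>\<eta>\<in>shell k. f \<eta> * (ee x \<eta> * cnj (ee x \<xi>)))"
      by (simp add: mult_ac)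
    finally show ?thesis by (simp add: ee_cnj)
  qed
  have "((\<lambda>x. \<Sum>\<eta>\<in>shell k. f \<eta> * ee x (\<eta> - \<xi>)) has_integral (\<Sum>\<eta>\<in>shell k. f \<eta> * (if \<eta> - \<xi> = 0 then 1 else 0))) unit_cube"
    apply (intro has_integral_sum finite_shell has_integral_mult_right)
    apply (unfold ee_def)
    apply (rule orth)
    done
  also have "(\<Sum>\<eta>\<in>shell k. f \<eta> * (if \<eta> - \<xi> = 0 then 1 else 0)) = f \<xi>"
    using assms by (simp add: if_distrib[of "\<lambda>t. f _ * t"] sum.delta cong: if_cong)
  finally show ?thesis by (simp add: eq)
qed

lemma coef_bound:
  assumes "\<xi> \<in> shell k" "p > 1"
  shows "norm (f \<xi>) \<le> Lp_norm_torus p (block f k)"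
proof -
  have cb: "continuous_on unit_cube (block f k)" by (rule cont_block) simp
  have i1: "(\<lambda>x. norm (block f k x)) integrable_on unit_cube"
    by (intro cont_int_cube continuous_intros cb)
  have "norm (f \<xi>) = norm (integral unit_cube (\<lambda>x. block f k x * cnj (ee x \<xi>)))"
    by (simp only: integral_unique[OF coef_integral[OF assms(1)]])
  also have "\<dots> \<le> integral unit_cube (\<lambda>x. norm (block f k x))"
    by (rule integral_norm_bound_integral[OF has_integral_integrable[OF coef_integral[OF assms(1)]] i1])
       (simp add: norm_mult)
  also have "\<dots> \<le> Lp_norm_torus p (block f k)"
    unfolding Lp_norm_torus_def by (rule L1_Lp_cube[OF cb assms(2)])
  finally show ?thesis .
qed



abbreviation LL :: "real \<Rightarrow> (int^'n \<Rightarrow> complex) \<Rightarrow> nat \<Rightarrow> real" where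
  "LL p f k \<equiv> Lp_norm_torus p (block f k)"

lemma LL_nonneg: "LL p f k \<ge> 0"
  by (simp add: Lp_norm_torus_def)

lemma besov_term_nonneg: "besov_term w p q f k \<ge> 0"
  by (simp add: besov_term_def)

lemma besov_norm_nonneg: "besov_norm w p q f \<ge> 0"
  by (simp add: besov_norm_def)

lemma cont_block'[continuous_intros]: "continuous_on S (block f k)"
  by (rule cont_block) simp

lemma int_block_powr: "p > 0 \<Longrightarrow> (\<lambda>x. norm (block f k x) powr p) integrable_on unit_cube"
  by (intro cont_int_cube cont_norm_powr cont_block') auto

lemma LL_le_bound:
  fixes f :: "int^'n \<Rightarrow> complex"
  assumes p: "p > 0" and M: "M \<ge> 0" and b: "\<And>x. x \<in> unit_cube \<Longrightarrow> norm (block f k x) \<le> M"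
  shows "LL p f k \<le> M"
proof -
  have "integral unit_cube (\<lambda>x. norm (block f k x) powr p) \<le> integral (unit_cube :: (real^'n) set) (\<lambda>x. M powr p)"
  proof (rule integral_le)
    show "(\<lambda>x. norm (block f k x) powr p) integrable_on unit_cube" by (rule int_block_powr[OF p])
    show "(\<lambda>x. M powr p) integrable_on (unit_cube :: (real^'n) set)" by (rule cont_int_cube[OF continuous_on_const])
  qed (use b p in \<open>auto intro: powr_mono2\<close>)
  also have "\<dots> = M powr p" by (rule integral_const_cube)
  finally have "integral unit_cube (\<lambda>x. norm (block f k x) powr p) powr (1/p) \<le> (M powr p) powr (1/p)"
    using p by (intro powr_mono2) (auto intro: integral_nonneg int_block_powr)
  then show ?thesis using p M by (simp add: Lp_norm_torus_def powr_powr)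
qed

lemma LL_le_sum:
  assumes p: "p > 0"
  shows "LL p f k \<le> (\<Sum>\<xi>\<in>shell k. norm (f \<xi>))"
  by (rule LL_le_bound[OF p]) (auto simp: block_ee intro!: sum_nonneg order.trans[OF norm_sum] sum_mono simp: norm_mult)

lemma block_add: "block (\<lambda>\<xi>. f \<xi> + g \<xi>) k x = block f k x + block g k x"
  by (simp add: block_def distrib_left sum.distrib)

lemma block_cmult: "block (\<lambda>\<xi>. c * f \<xi>) k x = c * block f k x"
  by (simp add: block_def sum_distrib_left mult_ac)

lemma LL_cmult:
  assumes p: "p > 0"
  shows "LL p (\<lambda>\<xi>. c * f \<xi>) k = norm c * LL p f k"
proof -
  have "integral unit_cube (\<lambda>x. norm (block (\<lambda>\<xi>. c * f \<xi>) k x) powr p)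
      = integral unit_cube (\<lambda>x. norm c powr p * norm (block f k x) powr p)"
    by (simp add: block_cmult norm_mult powr_mult)
  also have "\<dots> = norm c powr p * integral unit_cube (\<lambda>x. norm (block f k x) powr p)"
    by simp
  finally show ?thesis
    using p by (simp add: Lp_norm_torus_def powr_mult powr_powr integral_nonneg int_block_powr)
qed

lemma powr_sum_le:
  fixes A B s :: real
  assumes "A \<ge> 0" "B \<ge> 0" "s > 0"
  shows "(A + B) powr s \<le> 2 powr s * (A powr s + B powr s)"
proof -
  have "(A + B) powr s \<le> (2 * max A B) powr s"
    using assms by (intro powr_mono2) auto
  also have "\<dots> = 2 powr s * (max A B) powr s"
    using assms by (simp add: powr_mult)
  also have "(max A B) powr s \<le> A powr s + B powr s"
    using assms by (cases "A \<le> B") (auto simp: max_def)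
  finally show ?thesis by simp
qed

lemma LL_add:
  assumes p: "p > 0"
  shows "LL p (\<lambda>\<xi>. f \<xi> + g \<xi>) k \<le> 2 * 2 powr (1/p) * (LL p f k + LL p g k)"
proof -
  define A where "A = integral unit_cube (\<lambda>x. norm (block f k x) powr p)"
  define B where "B = integral unit_cube (\<lambda>x. norm (block g k x) powr p)"
  have A0: "A \<ge> 0"
    unfolding A_def by (rule integral_nonneg[OF int_block_powr[OF p]]) simp
  have B0: "B \<ge> 0"
    unfolding B_def by (rule integral_nonneg[OF int_block_powr[OF p]]) simp
  have "integral unit_cube (\<lambda>x. norm (block (\<lambda>\<xi>. f \<xi> + g \<xi>) k x) powr p)
     \<le> integral unit_cube (\<lambda>x. 2 powr p * (norm (block f k x) powr p + norm (block g k x) powr p))"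
  proof (rule integral_le)
    show "(\<lambda>x. norm (block (\<lambda>\<xi>. f \<xi> + g \<xi>) k x) powr p) integrable_on unit_cube"
      by (rule int_block_powr[OF p])
    show "(\<lambda>x. 2 powr p * (norm (block f k x) powr p + norm (block g k x) powr p)) integrable_on unit_cube"
      by (intro integrable_on_mult_right integrable_add int_block_powr p)
  next
    fix x
    have "norm (block (\<lambda>\<xi>. f \<xi> + g \<xi>) k x) powr p \<le> (norm (block f k x) + norm (block g k x)) powr p"
      using p by (auto simp: block_add intro!: powr_mono2 norm_triangle_ineq)
    also have "\<dots> \<le> 2 powr p * (norm (block f k x) powr p + norm (block g k x) powr p)"
      by (rule powr_sum_le) (use p in auto)
    finally show "norm (block (\<lambda>\<xi>. f \<xi> + g \<xi>) k x) powr p \<le> 2 powr p * (norm (block f k x) powr p + norm (block g k x) powr p)" .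
  qed
  also have "\<dots> = 2 powr p * (A + B)"
    unfolding A_def B_def
    by (simp add: Henstock_Kurzweil_Integration.integral_add int_block_powr p)
  finally have I: "integral unit_cube (\<lambda>x. norm (block (\<lambda>\<xi>. f \<xi> + g \<xi>) k x) powr p) \<le> 2 powr p * (A + B)" .
  have "LL p (\<lambda>\<xi>. f \<xi> + g \<xi>) k \<le> (2 powr p * (A + B)) powr (1/p)"
    unfolding Lp_norm_torus_def using p
    by (intro powr_mono2 I) (auto intro: integral_nonneg int_block_powr)
  also have "\<dots> = 2 * (A + B) powr (1/p)"
    using p A0 B0 by (simp add: powr_mult powr_powr)
  also have "(A + B) powr (1/p) \<le> 2 powr (1/p) * (A powr (1/p) + B powr (1/p))"
    by (rule powr_sum_le) (use p A0 B0 in auto)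
  finally show ?thesis
    by (simp add: A_def B_def Lp_norm_torus_def mult_ac)
qed



lemma besov_term_cmult:
  assumes p: "p > 0"
  shows "besov_term w p q (\<lambda>\<xi>. c * f \<xi>) k = norm c powr q * besov_term w p q f k"
  by (simp add: besov_term_def LL_cmult[OF p] powr_mult LL_nonneg mult_ac)

lemma besov_term_cmult_fun:
  assumes p: "p > 0"
  shows "besov_term w p q (\<lambda>\<xi>. c * f \<xi>) = (\<lambda>k. norm c powr q * besov_term w p q f k)"
  by (rule ext) (rule besov_term_cmult[OF p])

lemma besov_cmult:
  assumes p: "p > 0" and f: "f \<in> besov_space w p q"
  shows "(\<lambda>\<xi>. c * f \<xi>) \<in> besov_space w p q"
  using f by (simp add: besov_space_def besov_term_cmult_fun[OF p] summable_mult)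

lemma besov_norm_cmult:
  assumes p: "p > 0" and q: "q > 0" and f: "f \<in> besov_space w p q"
  shows "besov_norm w p q (\<lambda>\<xi>. c * f \<xi>) = norm c * besov_norm w p q f"
proof -
  have s: "summable (besov_term w p q f)" using f by (simp add: besov_space_def)
  have S0: "suminf (besov_term w p q f) \<ge> 0" by (rule suminf_nonneg[OF s besov_term_nonneg])
  have "besov_norm w p q (\<lambda>\<xi>. c * f \<xi>) = (norm c powr q * suminf (besov_term w p q f)) powr (1/q)"
    by (simp add: besov_norm_def besov_term_cmult_fun[OF p] suminf_mult[OF s])
  also have "\<dots> = norm c * besov_norm w p q f"
    using q S0 by (simp add: powr_mult powr_powr besov_norm_def)
  finally show ?thesis .
qed

lemma besov_term_add:
  assumes p: "p > 0" and q: "q > 0"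
  shows "besov_term w p q (\<lambda>\<xi>. f \<xi> + g \<xi>) k \<le>
     ((2 * 2 powr (1/p)) powr q * 2 powr q) * (besov_term w p q f k + besov_term w p q g k)"
proof -
  define c where "c = 2 * 2 powr (1/p)"
  have c0: "c \<ge> 0" by (simp add: c_def)
  have "LL p (\<lambda>\<xi>. f \<xi> + g \<xi>) k powr q \<le> (c * (LL p f k + LL p g k)) powr q"
    using LL_add[OF p, of f g k] q by (intro powr_mono2) (auto simp: c_def LL_nonneg)
  also have "\<dots> = c powr q * (LL p f k + LL p g k) powr q"
    using c0 by (simp add: powr_mult LL_nonneg)
  also have "(LL p f k + LL p g k) powr q \<le> 2 powr q * (LL p f k powr q + LL p g k powr q)"
    by (rule powr_sum_le) (auto simp: LL_nonneg q)
  finally have *: "LL p (\<lambda>\<xi>. f \<xi> + g \<xi>) k powr q \<le> c powr q * (2 powr q * (LL p f k powr q + LL p g k powr q))"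
    by (simp add: mult_left_mono)
  show ?thesis
    unfolding besov_term_def c_def[symmetric]
    using mult_left_mono[OF *, of "2 powr (real k * w * q)"]
    by (simp add: algebra_simps)
qed

lemma besov_add:
  assumes p: "p > 0" and q: "q > 0" and f: "f \<in> besov_space w p q" and g: "g \<in> besov_space w p q"
  shows "(\<lambda>\<xi>. f \<xi> + g \<xi>) \<in> besov_space w p q"
  unfolding besov_space_def mem_Collect_eq
proof (rule summable_comparison_test)
  show "\<exists>N. \<forall>n\<ge>N. norm (besov_term w p q (\<lambda>\<xi>. f \<xi> + g \<xi>) n) \<le>
     ((2 * 2 powr (1/p)) powr q * 2 powr q) * (besov_term w p q f n + besov_term w p q g n)"
    by (intro exI[of _ 0] allI impI) (simp add: abs_of_nonneg besov_term_nonneg besov_term_add[OF p q])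
  show "summable (\<lambda>n. ((2 * 2 powr (1/p)) powr q * 2 powr q) * (besov_term w p q f n + besov_term w p q g n))"
    using f g by (intro summable_mult summable_add) (auto simp: besov_space_def)
qed

lemma besov_diff:
  assumes p: "p > 0" and q: "q > 0" and f: "f \<in> besov_space w p q" and g: "g \<in> besov_space w p q"
  shows "(\<lambda>\<xi>. f \<xi> - g \<xi>) \<in> besov_space w p q"
proof -
  have "(\<lambda>\<xi>. f \<xi> + (-1) * g \<xi>) \<in> besov_space w p q"
    by (intro besov_add besov_cmult p q f g)
  then show ?thesis by simp
qed

lemma besov_norm_ge:
  assumes q: "q > 0" and f: "f \<in> besov_space w p q"
  shows "2 powr (real k * w) * LL p f k \<le> besov_norm w p q f"
proof -
  have s: "summable (besov_term w p q f)" using f by (simp add: besov_space_def)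
  have "besov_term w p q f k \<le> suminf (besov_term w p q f)"
    using sum_le_suminf[OF s, of "{k}"] by (simp add: besov_term_nonneg)
  then have "besov_term w p q f k powr (1/q) \<le> besov_norm w p q f"
    unfolding besov_norm_def using q by (intro powr_mono2) (auto intro: besov_term_nonneg)
  moreover have "besov_term w p q f k powr (1/q) = 2 powr (real k * w) * LL p f k"
    using q by (simp add: besov_term_def powr_mult powr_powr LL_nonneg)
  ultimately show ?thesis by simp
qed

definition cw :: "real \<Rightarrow> int^'n \<Rightarrow> real" where
  "cw w \<xi> = 2 powr (- (real (sidx \<xi>) * w))"

lemma cw_pos: "cw w \<xi> > 0" by (simp add: cw_def)

lemma coef_E:
  assumes p: "p > 1" and q: "q > 0" and f: "f \<in> besov_space w p q"
  shows "norm (f \<xi>) \<le> cw w \<xi> * besov_norm w p q f"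
proof -
  let ?k = "sidx \<xi>"
  have "norm (f \<xi>) \<le> LL p f ?k" by (rule coef_bound[OF in_shell_sidx p])
  also have "\<dots> = 2 powr (- (real ?k * w)) * (2 powr (real ?k * w) * LL p f ?k)"
    by (simp add: powr_minus field_simps)
  also have "\<dots> \<le> 2 powr (- (real ?k * w)) * besov_norm w p q f"
    by (intro mult_left_mono besov_norm_ge q f) simp
  finally show ?thesis by (simp add: cw_def)
qed

lemma LL_zero_block:
  assumes "\<And>\<xi>. \<xi> \<in> shell k \<Longrightarrow> f \<xi> = 0" and p: "p > 0"
  shows "LL p f k = 0"
proof -
  have "block f k = (\<lambda>x. 0)" using assms by (auto simp: block_def fun_eq_iff)
  then show ?thesis by (simp add: Lp_norm_torus_def)
qed

lemma besov_term_zero_block: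
  assumes "\<And>\<xi>. \<xi> \<in> shell k \<Longrightarrow> f \<xi> = 0" and p: "p > 0" and q: "q > 0"
  shows "besov_term w p q f k = 0"
  using LL_zero_block[OF assms(1) p] q by (simp add: besov_term_def)

lemma besov_fin:
  assumes fin: "finite {\<xi>. f \<xi> \<noteq> 0}" and p: "p > 0" and q: "q > 0"
  shows "f \<in> besov_space w p q"
proof -
  define K where "K = Max (insert 0 (sidx ` {\<xi>. f \<xi> \<noteq> 0}))"
  have "besov_term w p q f k = 0" if "k \<notin> {..K}" for k
  proof (rule besov_term_zero_block[OF _ p q])
    fix \<xi> :: "int^'a" assume "\<xi> \<in> shell k"
    then have "sidx \<xi> = k" by (simp add: shell_iff)
    show "f \<xi> = 0"
    proof (rule ccontr)
      assume "f \<xi> \<noteq> 0"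
      then have "sidx \<xi> \<le> K" unfolding K_def using fin by (intro Max_ge) auto
      then show False using that \<open>sidx \<xi> = k\<close> by simp
    qed
  qed
  then show ?thesis unfolding besov_space_def by (auto intro: summable_finite[of "{..K}"])
qed

lemma besov_zero: "p > 0 \<Longrightarrow> q > 0 \<Longrightarrow> (\<lambda>\<xi>::int^'n. 0::complex) \<in> besov_space w p q"
  by (rule besov_fin) auto

lemma besov_norm_zero:
  assumes p: "p > 0" and q: "q > 0"
  shows "besov_norm w p q (\<lambda>\<xi>::int^'n. 0) = 0"
proof -
  have "besov_term w p q (\<lambda>\<xi>::int^'n. 0) = (\<lambda>k. 0)"
    by (rule ext, rule besov_term_zero_block[OF _ p q]) auto
  then show ?thesis using q by (simp add: besov_norm_def)
qed



definition proj :: "nat \<Rightarrow> (int^'n \<Rightarrow> complex) \<Rightarrow> (int^'n \<Rightarrow> complex)" where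
  "proj K f = (\<lambda>\<xi>. if sidx \<xi> \<le> K then f \<xi> else 0)"

definition tailf :: "nat \<Rightarrow> (int^'n \<Rightarrow> complex) \<Rightarrow> (int^'n \<Rightarrow> complex)" where
  "tailf K f = (\<lambda>\<xi>. f \<xi> - proj K f \<xi>)"

definition chi :: "int^'n \<Rightarrow> int^'n \<Rightarrow> complex" where
  "chi \<xi> = (\<lambda>t. if t = \<xi> then 1 else 0)"

lemma SK_sub: "{\<xi>::int^'n. sidx \<xi> \<le> K} \<subseteq> (\<Union>k\<in>{..K}. shell k)"
  using in_shell_sidx by fastforce

lemma finite_SK: "finite {\<xi>::int^'n. sidx \<xi> \<le> K}"
  by (rule finite_subset[OF SK_sub]) auto

lemma proj_E:
  assumes p: "p > 0" and q: "q > 0"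
  shows "proj K f \<in> besov_space w p q"
  by (rule besov_fin[OF finite_subset[OF _ finite_SK[of K]] p q]) (auto simp: proj_def)

lemma chi_E:
  assumes p: "p > 0" and q: "q > 0"
  shows "chi \<xi> \<in> besov_space w p q"
  by (rule besov_fin[OF _ p q]) (auto simp: chi_def)

lemma block_proj_le: "k \<le> K \<Longrightarrow> block (proj K f) k = block f k"
  by (rule ext) (auto simp: block_def proj_def shell_iff intro!: sum.cong)

lemma term_proj:
  assumes p: "p > 0" and q: "q > 0"
  shows "besov_term w p q (proj K f) k = (if k \<le> K then besov_term w p q f k else 0)"
proof (cases "k \<le> K")
  case True then show ?thesis by (simp add: besov_term_def block_proj_le)
next
  case False
  then show ?thesis by (auto intro!: besov_term_zero_block[OF _ p q] simp: proj_def shell_iff)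
qed

lemma tailf_eq: "tailf K f = (\<lambda>\<xi>. if sidx \<xi> \<le> K then 0 else f \<xi>)"
  by (auto simp: tailf_def proj_def)

lemma block_tail_gt: "\<not> k \<le> K \<Longrightarrow> block (tailf K f) k = block f k"
  by (rule ext) (auto simp: block_def tailf_eq shell_iff intro!: sum.cong)

lemma term_tail:
  assumes p: "p > 0" and q: "q > 0"
  shows "besov_term w p q (tailf K f) k = (if k \<le> K then 0 else besov_term w p q f k)"
proof (cases "k \<le> K")
  case False then show ?thesis by (simp add: besov_term_def block_tail_gt)
next
  case True
  then show ?thesis by (auto intro!: besov_term_zero_block[OF _ p q] simp: tailf_eq shell_iff)
qed

lemma tail_E:
  assumes p: "p > 0" and q: "q > 0" and f: "f \<in> besov_space w p q"
  shows "tailf K f \<in> besov_space w p q"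
  unfolding tailf_def by (rule besov_diff[OF p q f proj_E[OF p q]])

lemma N_proj_le:
  assumes p: "p > 0" and q: "q > 0" and f: "f \<in> besov_space w p q"
  shows "besov_norm w p q (proj K f) \<le> besov_norm w p q f"
proof -
  have s: "summable (besov_term w p q f)" using f by (simp add: besov_space_def)
  have s2: "summable (besov_term w p q (proj K f))" using proj_E[OF p q] by (simp add: besov_space_def)
  have "suminf (besov_term w p q (proj K f)) \<le> suminf (besov_term w p q f)"
    by (rule suminf_le[OF _ s2 s]) (simp add: term_proj[OF p q] besov_term_nonneg)
  then show ?thesis unfolding besov_norm_def using q
    by (intro powr_mono2) (auto intro!: suminf_nonneg s2 besov_term_nonneg)
qed

lemma N_tail_lim:
  assumes p: "p > 0" and q: "q > 0" and f: "f \<in> besov_space w p q"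
  shows "(\<lambda>K. besov_norm w p q (tailf K f)) \<longlonglongrightarrow> 0"
proof -
  let ?t = "besov_term w p q f"
  have s: "summable ?t" using f by (simp add: besov_space_def)
  have su: "suminf (besov_term w p q (tailf K f)) = suminf ?t - (\<Sum>k<Suc K. ?t k)" for K
  proof -
    have "(\<lambda>k. if k \<in> {..<Suc K} then ?t k else 0) sums (\<Sum>k\<in>{..<Suc K}. ?t k)"
      by (rule sums_If_finite_set) simp
    from sums_diff[OF summable_sums[OF s] this]
    have "(\<lambda>k. ?t k - (if k \<in> {..<Suc K} then ?t k else 0)) sums (suminf ?t - (\<Sum>k<Suc K. ?t k))" .
    moreover have "(\<lambda>k. ?t k - (if k \<in> {..<Suc K} then ?t k else 0)) = besov_term w p q (tailf K f)"
      by (rule ext) (simp add: term_tail[OF p q])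
    ultimately show ?thesis by (simp add: sums_iff)
  qed
  have l: "(\<lambda>K. suminf ?t - (\<Sum>k<Suc K. ?t k)) \<longlonglongrightarrow> suminf ?t - suminf ?t"
    by (intro tendsto_diff tendsto_const LIMSEQ_Suc summable_LIMSEQ s)
  have "(\<lambda>K. (suminf (besov_term w p q (tailf K f))) powr (1/q)) \<longlonglongrightarrow> 0"
  proof (rule tendsto_zero_powrI[where b="1/q"])
    show "(\<lambda>K. suminf (besov_term w p q (tailf K f))) \<longlonglongrightarrow> 0" using l by (simp add: su)
    show "\<forall>\<^sub>F K in sequentially. 0 \<le> suminf (besov_term w p q (tailf K f))"
      using tail_E[OF p q f] by (intro always_eventually allI suminf_nonneg) (auto simp: besov_space_def besov_term_nonneg)
  qed (use q in auto)
  then show ?thesis by (simp add: besov_norm_def)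
qed

lemma proj_sum: "proj K f = (\<lambda>t. \<Sum>\<xi>\<in>{\<xi>. sidx \<xi> \<le> K}. f \<xi> * chi \<xi> t)"
  by (rule ext) (auto simp: proj_def chi_def if_distrib[of "\<lambda>x. _ * x"] finite_SK cong: if_cong)

section \<open>Dual functionals\<close>

lemma dual_bdd:
  assumes e: "e \<in> dual_space E N" and N0: "\<And>u. u \<in> E \<Longrightarrow> N u \<ge> 0"
  shows "bdd_above {norm (e u) | u. u \<in> E \<and> N u \<le> 1}"
proof -
  obtain B where B: "\<And>u. u \<in> E \<Longrightarrow> norm (e u) \<le> B * N u" using e unfolding dual_space_def by blast
  have "norm (e u) \<le> max B 0" if "u \<in> E" "N u \<le> 1" for u
  proof -
    have "norm (e u) \<le> B * N u" by (rule B[OF that(1)])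
    also have "\<dots> \<le> max B 0 * N u" using N0[OF that(1)] by (intro mult_right_mono) auto
    also have "\<dots> \<le> max B 0" using that N0[OF that(1)] by (intro mult_left_le) auto
    finally show ?thesis .
  qed
  then show ?thesis by (auto intro!: bdd_aboveI)
qed

context
  fixes w p q :: real
  assumes p: "p > 1" and q: "q > 0"
begin

lemma p0: "p > 0" using p by simp

lemma dual_norm_nonneg:
  fixes e :: "(int^'n \<Rightarrow> complex) \<Rightarrow> complex"
  assumes e: "e \<in> dual_space (besov_space w p q) (besov_norm w p q)"
  shows "dual_norm (besov_space w p q) (besov_norm w p q) e \<ge> 0"
proof -
  let ?S = "{norm (e u) | u. u \<in> besov_space w p q \<and> besov_norm w p q u \<le> 1}"
  have z0: "(\<lambda>\<xi>::int^'n. 0::complex) \<in> besov_space w p q" by (rule besov_zero[OF p0 q])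
  have N0: "besov_norm w p q (\<lambda>\<xi>::int^'n. 0::complex) = 0" by (rule besov_norm_zero[OF p0 q])
  have "norm (e (\<lambda>\<xi>. 0)) \<in> ?S"
    by (intro CollectI exI[of _ "\<lambda>\<xi>::int^'n. 0::complex"]) (simp add: z0 N0)
  then have "norm (e (\<lambda>\<xi>. 0)) \<le> Sup ?S"
    by (rule cSup_upper) (rule dual_bdd[OF e besov_norm_nonneg])
  then show ?thesis unfolding dual_norm_def by (meson norm_ge_zero order_trans)
qed

lemma dual_bound:
  fixes e :: "(int^'n \<Rightarrow> complex) \<Rightarrow> complex"
  assumes e: "e \<in> dual_space (besov_space w p q) (besov_norm w p q)"
    and u: "u \<in> besov_space w p q"
  shows "norm (e u) \<le> dual_norm (besov_space w p q) (besov_norm w p q) e * besov_norm w p q u"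
proof -
  let ?E = "besov_space w p q" and ?N = "besov_norm w p q"
  let ?S = "{norm (e u) | u. u \<in> ?E \<and> ?N u \<le> 1}"
  have hom: "\<And>u c. u \<in> ?E \<Longrightarrow> e (\<lambda>t. c * u t) = c * e u" using e by (auto simp: dual_space_def)
  show ?thesis
  proof (cases "?N u = 0")
    case True
    have "u = (\<lambda>t. 0 * u t)"
    proof (rule ext)
      fix t
      have "norm (u t) \<le> cw w t * ?N u" by (rule coef_E[OF p q u])
      then show "u t = 0 * u t" using True by simp
    qed
    then have "e u = 0 * e u" using hom[OF u, of 0] by metis
    then show ?thesis using True by simp
  next
    case False
    then have Np: "?N u > 0" using besov_norm_nonneg[of w p q u] by simp
    define v where "v = (\<lambda>t. complex_of_real (1 / ?N u) * u t)"
    have vE: "v \<in> ?E" unfolding v_def by (rule besov_cmult[OF p0 u])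
    have "?N v = norm (complex_of_real (1 / ?N u)) * ?N u" unfolding v_def by (rule besov_norm_cmult[OF p0 q u])
    then have Nv: "?N v = 1" using Np by (simp add: norm_divide)
    have ev: "e v = complex_of_real (1 / ?N u) * e u" unfolding v_def by (rule hom[OF u])
    have "norm (e v) \<in> ?S" using vE Nv by auto
    then have "norm (e v) \<le> Sup ?S"
      by (rule cSup_upper) (rule dual_bdd[OF e besov_norm_nonneg])
    then have "norm (e u) / ?N u \<le> dual_norm ?E ?N e"
      using Np by (simp add: ev dual_norm_def norm_mult norm_divide)
    then show ?thesis using Np by (simp add: field_simps)
  qed
qed

lemma dual_sum:
  fixes e :: "(int^'n \<Rightarrow> complex) \<Rightarrow> complex"
  assumes e: "e \<in> dual_space (besov_space w p q) (besov_norm w p q)"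
    and F: "finite F" and g: "\<And>\<xi>. \<xi> \<in> F \<Longrightarrow> g \<xi> \<in> besov_space w p q"
  shows "e (\<lambda>t. \<Sum>\<xi>\<in>F. c \<xi> * g \<xi> t) = (\<Sum>\<xi>\<in>F. c \<xi> * e (g \<xi>))
     \<and> (\<lambda>t. \<Sum>\<xi>\<in>F. c \<xi> * g \<xi> t) \<in> besov_space w p q"
  using F g
proof (induction F rule: finite_induct)
  case empty
  have hom: "\<And>u c. u \<in> besov_space w p q \<Longrightarrow> e (\<lambda>t. c * u t) = c * e u"
    using e by (auto simp: dual_space_def)
  have z0: "(\<lambda>\<xi>::int^'n. 0::complex) \<in> besov_space w p q" by (rule besov_zero[OF p0 q])
  have "e (\<lambda>t. 0 * (\<lambda>\<xi>::int^'n. 0::complex) t) = 0 * e (\<lambda>\<xi>. 0)" by (rule hom[OF z0])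
  then show ?case using z0 by simp
next
  case (insert x F)
  then have IH: "e (\<lambda>t. \<Sum>\<xi>\<in>F. c \<xi> * g \<xi> t) = (\<Sum>\<xi>\<in>F. c \<xi> * e (g \<xi>))"
      "(\<lambda>t. \<Sum>\<xi>\<in>F. c \<xi> * g \<xi> t) \<in> besov_space w p q" by auto
  have gx: "g x \<in> besov_space w p q" using insert by auto
  have cg: "(\<lambda>t. c x * g x t) \<in> besov_space w p q" by (rule besov_cmult[OF p0 gx])
  have eq: "(\<lambda>t. \<Sum>\<xi>\<in>insert x F. c \<xi> * g \<xi> t) = (\<lambda>t. c x * g x t + (\<Sum>\<xi>\<in>F. c \<xi> * g \<xi> t))"
    using insert by simp
  have add: "e (\<lambda>t. c x * g x t + (\<Sum>\<xi>\<in>F. c \<xi> * g \<xi> t)) = e (\<lambda>t. c x * g x t) + e (\<lambda>t. \<Sum>\<xi>\<in>F. c \<xi> * g \<xi> t)"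
  proof -
    have addE: "\<And>u v. u \<in> besov_space w p q \<Longrightarrow> v \<in> besov_space w p q \<Longrightarrow> e (\<lambda>t. u t + v t) = e u + e v"
      using e by (auto simp: dual_space_def)
    show ?thesis by (rule addE[OF cg IH(2)])
  qed
  have hom: "e (\<lambda>t. c x * g x t) = c x * e (g x)"
  proof -
    have homE: "\<And>u c. u \<in> besov_space w p q \<Longrightarrow> e (\<lambda>t. c * u t) = c * e u"
      using e by (auto simp: dual_space_def)
    show ?thesis by (rule homE[OF gx])
  qed
  show ?case
    unfolding eq using insert add hom IH besov_add[OF p0 q cg IH(2)] by simp
qed

end



lemma filterlim_SK:
  "filterlim (\<lambda>K. {\<xi>::int^'n. sidx \<xi> \<le> K}) (finite_subsets_at_top UNIV) sequentially"
  unfolding filterlim_def le_filter_def eventually_filtermap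
proof (intro allI impI)
  fix P assume "eventually P (finite_subsets_at_top (UNIV :: (int^'n) set))"
  then obtain X where X: "finite X" "\<And>Y. finite Y \<Longrightarrow> X \<subseteq> Y \<Longrightarrow> P Y"
    unfolding eventually_finite_subsets_at_top by auto
  define K0 where "K0 = Max (insert 0 (sidx ` X))"
  show "eventually (\<lambda>K. P {\<xi>. sidx \<xi> \<le> K}) sequentially"
  proof (rule eventually_sequentiallyI[of K0])
    fix K assume K: "K0 \<le> K"
    have "X \<subseteq> {\<xi>. sidx \<xi> \<le> K}"
    proof
      fix \<xi> assume "\<xi> \<in> X"
      then have "sidx \<xi> \<le> K0" unfolding K0_def using X(1) by (intro Max_ge) auto
      then show "\<xi> \<in> {\<xi>. sidx \<xi> \<le> K}" using K by simp
    qed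
    then show "P {\<xi>. sidx \<xi> \<le> K}" by (intro X(2) finite_SK)
  qed
qed

lemma sum_SK_lim:
  assumes "a summable_on UNIV"
  shows "(\<lambda>K. \<Sum>\<xi>\<in>{\<xi>::int^'n. sidx \<xi> \<le> K}. a \<xi>) \<longlonglongrightarrow> (\<Sum>\<^sub>\<infinity>\<xi>. (a \<xi> :: complex))"
proof -
  have "(sum a \<longlongrightarrow> (\<Sum>\<^sub>\<infinity>\<xi>. a \<xi>)) (finite_subsets_at_top UNIV)"
    using assms unfolding has_sum_def[symmetric] by (rule has_sum_infsum)
  from filterlim_compose[OF this filterlim_SK] show ?thesis by (simp add: o_def)
qed

lemma fm_E:
  fixes a :: "int^'n \<Rightarrow> complex"
  assumes "nuclear_rep r (besov_space w p q) (besov_norm w p q) (fourier_mult a) e y"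
    and "u \<in> besov_space w p q"
  shows "fourier_mult a u \<in> besov_space w p q"
  using assms by (auto simp: nuclear_rep_def)

theorem trace_formula:
  fixes a :: "int^'n \<Rightarrow> complex"
    and e :: "nat \<Rightarrow> (int^'n \<Rightarrow> complex) \<Rightarrow> complex"
    and y :: "nat \<Rightarrow> int^'n \<Rightarrow> complex"
  assumes p: "p > 1" and q: "q > 0" and asum: "a summable_on UNIV"
    and nr: "nuclear_rep 1 (besov_space w p q) (besov_norm w p q) (fourier_mult a) e y"
  shows "(\<lambda>k. e k (y k)) sums (\<Sum>\<^sub>\<infinity>\<xi>. a \<xi>)"
proof -
  let ?E = "besov_space w p q" and ?N = "besov_norm w p q"
  define dn where "dn k = dual_norm ?E ?N (e k)" for k
  have p0: "p > 0" using p by simp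
  have eE: "\<And>k. e k \<in> dual_space ?E ?N" and yE: "\<And>k. y k \<in> ?E"
    using nr by (auto simp: nuclear_rep_def)
  have conv: "\<And>u. u \<in> ?E \<Longrightarrow> (\<lambda>K. ?N (\<lambda>t. fourier_mult a u t - (\<Sum>k<K. e k u * y k t))) \<longlonglongrightarrow> 0"
    using nr by (auto simp: nuclear_rep_def)
  have dn0: "\<And>k. dn k \<ge> 0" unfolding dn_def by (rule dual_norm_nonneg[OF p q eE])
  have Msum: "summable (\<lambda>k. dn k * ?N (y k))"
    using nr by (simp add: nuclear_rep_def dn_def[symmetric] powr_one dn0 besov_norm_nonneg)
  have sumE: "(\<lambda>t. \<Sum>k\<in>F. c k * g k t) \<in> ?E" if "finite F" "\<And>k. k \<in> F \<Longrightarrow> g k \<in> ?E"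
    for F :: "nat set" and c and g :: "nat \<Rightarrow> int^'n \<Rightarrow> complex"
    using dual_sum[OF p q eE[of 0], of F g c] that by blast
  have col: "(\<lambda>k. y k \<xi> * e k (chi \<xi>)) sums a \<xi>" for \<xi>
  proof -
    let ?u = "chi \<xi>"
    have uE: "?u \<in> ?E" by (rule chi_E[OF p0 q])
    have TuE: "fourier_mult a ?u \<in> ?E" by (rule fm_E[OF nr uE])
    define D where "D K = (\<lambda>t. fourier_mult a ?u t - (\<Sum>k<K. e k ?u * y k t))" for K
    have DE: "D K \<in> ?E" for K unfolding D_def
      by (rule besov_diff[OF p0 q TuE sumE]) (auto intro: yE)
    have "(\<lambda>K. a \<xi> - (\<Sum>k<K. y k \<xi> * e k ?u)) \<longlonglongrightarrow> 0"
    proof (rule Lim_null_comparison)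
      show "\<forall>\<^sub>F K in sequentially. norm (a \<xi> - (\<Sum>k<K. y k \<xi> * e k ?u)) \<le> cw w \<xi> * ?N (D K)"
      proof (rule always_eventually, rule allI)
        fix K
        have "D K \<xi> = a \<xi> - (\<Sum>k<K. y k \<xi> * e k ?u)"
          by (simp add: D_def fourier_mult_def chi_def mult_ac)
        then show "norm (a \<xi> - (\<Sum>k<K. y k \<xi> * e k ?u)) \<le> cw w \<xi> * ?N (D K)"
          using coef_E[OF p q DE, of K \<xi>] by simp
      qed
      show "(\<lambda>K. cw w \<xi> * ?N (D K)) \<longlonglongrightarrow> 0"
        using tendsto_mult_right_zero[OF conv[OF uE]] by (simp add: D_def)
    qed
    then have "(\<lambda>K. a \<xi> - (a \<xi> - (\<Sum>k<K. y k \<xi> * e k ?u))) \<longlonglongrightarrow> a \<xi> - 0"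
      by (intro tendsto_diff tendsto_const)
    then have "(\<lambda>K. \<Sum>k<K. y k \<xi> * e k ?u) \<longlonglongrightarrow> a \<xi>" by simp
    then show ?thesis by (simp add: sums_def)
  qed
  have row: "(\<lambda>k. e k (proj K (y k))) sums (\<Sum>\<xi>\<in>{\<xi>. sidx \<xi> \<le> K}. a \<xi>)" for K
  proof -
    have eq: "e k (proj K (y k)) = (\<Sum>\<xi>\<in>{\<xi>. sidx \<xi> \<le> K}. y k \<xi> * e k (chi \<xi>))" for k
      unfolding proj_sum
      by (rule conjunct1[OF dual_sum[OF p q eE finite_SK chi_E[OF p0 q]]])
    have "(\<lambda>k. \<Sum>\<xi>\<in>{\<xi>. sidx \<xi> \<le> K}. y k \<xi> * e k (chi \<xi>)) sums (\<Sum>\<xi>\<in>{\<xi>. sidx \<xi> \<le> K}. a \<xi>)"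
      by (rule sums_sum[OF col])
    then show ?thesis by (simp add: eq)
  qed
  have decomp: "e k (y k) = e k (proj K (y k)) + e k (tailf K (y k))" for k K
  proof -
    have addE: "\<And>u v. u \<in> ?E \<Longrightarrow> v \<in> ?E \<Longrightarrow> e k (\<lambda>t. u t + v t) = e k u + e k v"
      using eE[of k] by (auto simp: dual_space_def)
    have "y k = (\<lambda>t. proj K (y k) t + tailf K (y k) t)" by (simp add: tailf_def)
    then show ?thesis using addE[OF proj_E[OF p0 q] tail_E[OF p0 q yE]] by metis
  qed
  have lim_k: "(\<lambda>K. e k (proj K (y k))) \<longlonglongrightarrow> e k (y k)" for k
  proof -
    have "(\<lambda>K. e k (y k) - e k (proj K (y k))) \<longlonglongrightarrow> 0"
    proof (rule Lim_null_comparison)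
      show "\<forall>\<^sub>F K in sequentially. norm (e k (y k) - e k (proj K (y k))) \<le> dn k * ?N (tailf K (y k))"
      proof (rule always_eventually, rule allI)
        fix K
        have "e k (y k) - e k (proj K (y k)) = e k (tailf K (y k))" using decomp[of k K] by simp
        then show "norm (e k (y k) - e k (proj K (y k))) \<le> dn k * ?N (tailf K (y k))"
          using dual_bound[OF p q eE tail_E[OF p0 q yE]] by (simp add: dn_def)
      qed
      show "(\<lambda>K. dn k * ?N (tailf K (y k))) \<longlonglongrightarrow> 0"
        by (rule tendsto_mult_right_zero[OF N_tail_lim[OF p0 q yE]])
    qed
    then have "(\<lambda>K. e k (y k) - (e k (y k) - e k (proj K (y k)))) \<longlonglongrightarrow> e k (y k) - 0"
      by (intro tendsto_diff tendsto_const)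
    then show ?thesis by simp
  qed
  have bnd: "norm (e k (proj K (y k))) \<le> dn k * ?N (y k)" for k K
  proof -
    have "norm (e k (proj K (y k))) \<le> dn k * ?N (proj K (y k))"
      unfolding dn_def by (rule dual_bound[OF p q eE proj_E[OF p0 q]])
    also have "\<dots> \<le> dn k * ?N (y k)"
      by (intro mult_left_mono N_proj_le[OF p0 q yE] dn0)
    finally show ?thesis .
  qed
  have T: "eventually (\<lambda>n. summable (\<lambda>k. norm (e k (proj n (y k))))) sequentially \<and>
           summable (\<lambda>k. norm (e k (y k))) \<and>
           ((\<lambda>K. suminf (\<lambda>k. e k (proj K (y k)))) \<longlonglongrightarrow> suminf (\<lambda>k. e k (y k)))"
    by (rule tannerys_theorem[OF lim_k _ Msum]) (auto intro!: always_eventually bnd)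
  have "(\<lambda>K. suminf (\<lambda>k. e k (proj K (y k)))) = (\<lambda>K. \<Sum>\<xi>\<in>{\<xi>. sidx \<xi> \<le> K}. a \<xi>)"
    using row by (simp add: sums_iff)
  with T have "(\<lambda>K. \<Sum>\<xi>\<in>{\<xi>. sidx \<xi> \<le> K}. a \<xi>) \<longlonglongrightarrow> suminf (\<lambda>k. e k (y k))" by simp
  from LIMSEQ_unique[OF this sum_SK_lim[OF asum]]
  have "suminf (\<lambda>k. e k (y k)) = (\<Sum>\<^sub>\<infinity>\<xi>. a \<xi>)" .
  moreover have "summable (\<lambda>k. e k (y k))" using T by (auto intro: summable_norm_cancel)
  ultimately show ?thesis by (simp add: sums_iff)
qed



lemma SK_union: "{\<xi>::int^'n. sidx \<xi> \<le> K} = (\<Union>k\<in>{..K}. shell k)"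
  by (auto simp: shell_iff)

lemma sum_SK: "sum h {\<xi>::int^'n. sidx \<xi> \<le> K} = (\<Sum>k\<le>K. sum h (shell k))"
  unfolding SK_union
  by (rule sum.UNION_disjoint) (auto dest: shell_disj)

lemma shell_powr_bound:
  fixes s :: real
  assumes s: "s \<le> 0" and "\<xi> \<in> shell k"
  shows "jbr \<xi> powr s \<le> 2 powr (real k * s)"
proof -
  have "jbr \<xi> powr s \<le> (2 ^ k) powr s"
    by (rule powr_mono2'[OF s]) (use jbr_shell[OF assms(2)] in auto)
  also have "(2 ^ k :: real) powr s = 2 powr (real k * s)"
    by (simp add: powr_realpow[symmetric] powr_powr)
  finally show ?thesis .
qed

lemma jbr_powr_summable:
  fixes s :: real
  assumes s: "s < - real CARD('n)"
  shows "(\<lambda>\<xi>::int^'n. jbr \<xi> powr s) summable_on UNIV"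
proof (rule nonneg_bdd_above_summable_on)
  show "\<And>x. x \<in> UNIV \<Longrightarrow> 0 \<le> jbr x powr s" by simp
  define n where "n = real CARD('n)"
  define r where "r = (2::real) powr (n + s)"
  have r0: "r > 0" unfolding r_def by simp
  have "r < 2 powr 0" unfolding r_def by (rule powr_less_mono) (use s in \<open>auto simp: n_def\<close>)
  then have r1: "r < 1" by simp
  have bound: "sum (\<lambda>\<xi>. jbr \<xi> powr s) {\<xi>::int^'n. sidx \<xi> \<le> K} \<le> 8 ^ CARD('n) * (1 / (1 - r))" for K
  proof -
    have s0: "s \<le> 0" using s by simp
    have sh: "sum (\<lambda>\<xi>. jbr \<xi> powr s) (shell k :: (int^'n) set) \<le> 8 ^ CARD('n) * r ^ k" for k
    proof -
      have "sum (\<lambda>\<xi>. jbr \<xi> powr s) (shell k :: (int^'n) set) \<le> real (card (shell k :: (int^'n) set)) * 2 powr (real k * s)"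
        by (rule sum_bounded_above) (rule shell_powr_bound[OF s0])
      also have "\<dots> \<le> (8 ^ CARD('n) * 2 ^ (k * CARD('n))) * 2 powr (real k * s)"
        by (intro mult_right_mono card_shell) simp
      also have "\<dots> = 8 ^ CARD('n) * (2 ^ (k * CARD('n)) * 2 powr (real k * s))"
        by (simp add: mult.assoc)
      also have "(2::real) ^ (k * CARD('n)) * 2 powr (real k * s) = r ^ k"
      proof -
        have "(2::real) ^ (k * CARD('n)) = 2 powr (real (k * CARD('n)))" by (rule powr_realpow[symmetric]) simp
        then have "(2::real) ^ (k * CARD('n)) * 2 powr (real k * s) = 2 powr ((n + s) * real k)"
          by (simp add: powr_add[symmetric] n_def algebra_simps)
        also have "\<dots> = r powr real k" by (simp add: r_def powr_powr)
        also have "\<dots> = r ^ k" using r0 by (simp add: powr_realpow)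
        finally show ?thesis .
      qed
      finally show ?thesis .
    qed
    have "sum (\<lambda>\<xi>. jbr \<xi> powr s) {\<xi>::int^'n. sidx \<xi> \<le> K} = (\<Sum>k\<le>K. sum (\<lambda>\<xi>. jbr \<xi> powr s) (shell k :: (int^'n) set))"
      by (rule sum_SK)
    also have "\<dots> \<le> (\<Sum>k\<le>K. 8 ^ CARD('n) * r ^ k)"
      by (rule sum_mono) (rule sh)
    also have "\<dots> = 8 ^ CARD('n) * (\<Sum>k\<le>K. r ^ k)"
      by (simp add: sum_distrib_left)
    also have "(\<Sum>k\<le>K. r ^ k) \<le> (\<Sum>k. r ^ k)"
      by (rule sum_le_suminf) (use r0 r1 in \<open>auto intro: summable_geometric\<close>)
    also have "(\<Sum>k. r ^ k) = 1 / (1 - r)"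
      using r0 r1 by (simp add: suminf_geometric)
    finally show ?thesis by simp
  qed
  show "bdd_above (sum (\<lambda>\<xi>::int^'n. jbr \<xi> powr s) ` {F. F \<subseteq> UNIV \<and> finite F})"
  proof (rule bdd_aboveI2)
    fix F :: "(int^'n) set" assume "F \<in> {F. F \<subseteq> UNIV \<and> finite F}"
    then have F: "finite F" by simp
    define K where "K = Max (insert 0 (sidx ` F))"
    have sub: "F \<subseteq> {\<xi>. sidx \<xi> \<le> K}" unfolding K_def using F by (auto intro: Max_ge)
    have "sum (\<lambda>\<xi>. jbr \<xi> powr s) F \<le> sum (\<lambda>\<xi>. jbr \<xi> powr s) {\<xi>::int^'n. sidx \<xi> \<le> K}"
      by (rule sum_mono2[OF finite_SK sub]) simp
    also have "\<dots> \<le> 8 ^ CARD('n) * (1 / (1 - r))" by (rule bound)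
    finally show "sum (\<lambda>\<xi>. jbr \<xi> powr s) F \<le> 8 ^ CARD('n) * (1 / (1 - r))" .
  qed
qed

lemma a_summable:
  fixes a :: "int^'n \<Rightarrow> complex"
  assumes "\<forall>\<xi>. norm (a \<xi>) \<le> C * (jbr \<xi>) powr m" and "m < - real CARD('n)"
  shows "a summable_on UNIV"
proof -
  have "(\<lambda>\<xi>::int^'n. C * jbr \<xi> powr m) summable_on UNIV"
    by (intro summable_on_cmult_right jbr_powr_summable assms(2))
  then have "(\<lambda>\<xi>. norm (a \<xi>)) summable_on UNIV"
    by (rule Infinite_Sum.abs_summable_on_comparison_test') (use assms(1) in auto)
  then show ?thesis by (rule Infinite_Sum.abs_summable_summable)
qed



lemma mult_LL_bound:
  fixes a u g :: "int^'n \<Rightarrow> complex"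
  assumes p: "p > 1" and C: "C \<ge> 0" and aC: "\<forall>\<xi>. norm (a \<xi>) \<le> C * (jbr \<xi>) powr m"
    and m: "m \<le> - real CARD('n)"
    and g: "\<And>\<xi>. norm (g \<xi>) \<le> norm (a \<xi>) * norm (u \<xi>)"
  shows "LL p g k \<le> (8 ^ CARD('n) * C) * LL p u k"
proof -
  have m0: "m \<le> 0" using m by simp
  have "LL p g k \<le> (\<Sum>\<xi>\<in>shell k. norm (g \<xi>))" by (rule LL_le_sum) (use p in simp)
  also have "\<dots> \<le> (\<Sum>\<xi>\<in>(shell k :: (int^'n) set). (C * 2 powr (real k * m)) * LL p u k)"
  proof (rule sum_mono)
    fix \<xi> :: "int^'n" assume xi: "\<xi> \<in> shell k"
    have "norm (g \<xi>) \<le> norm (a \<xi>) * norm (u \<xi>)" by (rule g)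
    also have "\<dots> \<le> (C * 2 powr (real k * m)) * LL p u k"
    proof (rule mult_mono)
      show "norm (a \<xi>) \<le> C * 2 powr (real k * m)"
        using aC shell_powr_bound[OF m0 xi] C by (meson mult_left_mono order_trans)
      show "norm (u \<xi>) \<le> LL p u k" by (rule coef_bound[OF xi p])
    qed (use C in auto)
    finally show "norm (g \<xi>) \<le> (C * 2 powr (real k * m)) * LL p u k" .
  qed
  also have "\<dots> = real (card (shell k :: (int^'n) set)) * (C * 2 powr (real k * m)) * LL p u k"
    by simp
  also have "\<dots> \<le> (8 ^ CARD('n) * 2 ^ (k * CARD('n))) * (C * 2 powr (real k * m)) * LL p u k"
    by (intro mult_right_mono card_shell LL_nonneg) (use C in auto)
  also have "\<dots> = (8 ^ CARD('n) * C) * (2 ^ (k * CARD('n)) * 2 powr (real k * m)) * LL p u k"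
    by (simp add: mult_ac)
  also have "\<dots> \<le> (8 ^ CARD('n) * C) * 1 * LL p u k"
  proof (intro mult_right_mono mult_left_mono LL_nonneg)
    have "(2::real) ^ (k * CARD('n)) = 2 powr (real (k * CARD('n)))" by (rule powr_realpow[symmetric]) simp
    then have "(2::real) ^ (k * CARD('n)) * 2 powr (real k * m) = 2 powr (real k * (real CARD('n) + m))"
      by (simp add: powr_add[symmetric] algebra_simps)
    also have "\<dots> \<le> 2 powr 0"
      by (rule powr_mono) (use m in \<open>auto intro!: mult_nonneg_nonpos\<close>)
    finally show "(2::real) ^ (k * CARD('n)) * 2 powr (real k * m) \<le> 1" by simp
  qed (use C in auto)
  finally show ?thesis by simp
qed

lemma mult_term_bound:
  fixes a u g :: "int^'n \<Rightarrow> complex"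
  assumes p: "p > 1" and q: "q > 0" and C: "C \<ge> 0" and aC: "\<forall>\<xi>. norm (a \<xi>) \<le> C * (jbr \<xi>) powr m"
    and m: "m \<le> - real CARD('n)"
    and g: "\<And>\<xi>. norm (g \<xi>) \<le> norm (a \<xi>) * norm (u \<xi>)"
  shows "besov_term w p q g k \<le> (8 ^ CARD('n) * C) powr q * besov_term w p q u k"
proof -
  have "LL p g k powr q \<le> ((8 ^ CARD('n) * C) * LL p u k) powr q"
    by (intro powr_mono2 mult_LL_bound[OF p C aC m g]) (use q in \<open>auto simp: LL_nonneg\<close>)
  also have "\<dots> = (8 ^ CARD('n) * C) powr q * LL p u k powr q"
    using C by (simp add: powr_mult LL_nonneg)
  finally show ?thesis
    unfolding besov_term_def using mult_left_mono[of _ _ "2 powr (real k * w * q)"]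
    by (simp add: mult_ac)
qed

lemma chi_term:
  assumes p: "p > 0" and q: "q > 0"
  shows "besov_term w p q (chi \<xi>) k = (if k = sidx \<xi> then 2 powr (real k * w * q) else 0)"
proof (cases "k = sidx \<xi>")
  case True
  have "block (chi \<xi>) k = (\<lambda>x. ee x \<xi>)"
    using True in_shell_sidx[of \<xi>]
    by (auto simp: block_ee chi_def fun_eq_iff if_distrib[of "\<lambda>t. _ * t"] cong: if_cong)
  then have "LL p (chi \<xi>) k = 1"
    using integral_const_cube[where 'n='a, of 1] by (simp add: Lp_norm_torus_def)
  then show ?thesis using True by (simp add: besov_term_def)
next
  case False
  then show ?thesis
    by (auto intro!: besov_term_zero_block[OF _ p q] simp: chi_def shell_iff)
qed

lemma chi_norm:
  assumes p: "p > 0" and q: "q > 0"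
  shows "besov_norm w p q (chi \<xi>) = 2 powr (real (sidx \<xi>) * w)"
proof -
  have "besov_term w p q (chi \<xi>) = (\<lambda>k. if k = sidx \<xi> then 2 powr (real (sidx \<xi>) * w * q) else 0)"
    by (rule ext) (simp add: chi_term[OF p q])
  then have "suminf (besov_term w p q (chi \<xi>)) = 2 powr (real (sidx \<xi>) * w * q)"
    using sums_single[of "sidx \<xi>" "\<lambda>_. 2 powr (real (sidx \<xi>) * w * q)"] by (simp add: sums_iff)
  then show ?thesis using q by (simp add: besov_norm_def powr_powr)
qed



lemma infinite_UNIV_vec_int: "infinite (UNIV :: (int^'n) set)"
proof
  assume "finite (UNIV :: (int^'n) set)"
  then have "finite (range (\<lambda>z::int. vec z :: int^'n))" by (rule finite_subset[rotated]) auto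
  moreover have "inj (\<lambda>z::int. vec z :: int^'n)"
    by (rule injI) (metis vec_component)
  ultimately have "finite (UNIV :: int set)" by (rule finite_imageD)
  then show False by simp
qed

definition en :: "nat \<Rightarrow> int^'n" where "en = from_nat_into UNIV"

lemma bij_en: "bij_betw (en :: nat \<Rightarrow> int^'n) UNIV UNIV"
  unfolding en_def by (rule bij_betw_from_nat_into) (auto simp: infinite_UNIV_vec_int)

lemma inj_en: "inj (en :: nat \<Rightarrow> int^'n)"
  using bij_en[where 'n='n] by (simp add: bij_betw_def)

lemma surj_en: "\<exists>k. en k = (\<xi> :: int^'n)"
  using bij_en[where 'n='n] by (metis bij_betw_imp_surj_on rangeE UNIV_I)

lemma partial_sum_en:
  fixes a u :: "int^'n \<Rightarrow> complex"
  shows "(\<Sum>k<K. (a (en k) * u (en k)) * chi (en k) t) = (if t \<in> en ` {..<K} then a t * u t else 0)"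
proof -
  have "(\<Sum>k<K. (a (en k) * u (en k)) * chi (en k) t) = (\<Sum>\<xi>\<in>en ` {..<K}. (a \<xi> * u \<xi>) * chi \<xi> t)"
    by (subst sum.reindex) (auto intro: inj_on_subset[OF inj_en])
  also have "\<dots> = (\<Sum>\<xi>\<in>en ` {..<K}. if t = \<xi> then a t * u t else 0)"
    by (rule sum.cong) (auto simp: chi_def)
  also have "\<dots> = (if t \<in> en ` {..<K} then a t * u t else 0)"
    by (simp add: sum.delta)
  finally show ?thesis .
qed

lemma cover_en: "\<exists>K0. \<forall>K\<ge>K0. {\<xi>::int^'n. sidx \<xi> \<le> J} \<subseteq> en ` {..<K}"
proof -
  define idx where "idx \<xi> = (SOME k. en k = \<xi>)" for \<xi> :: "int^'n"
  have idx: "en (idx \<xi>) = \<xi>" for \<xi> unfolding idx_def by (rule someI_ex[OF surj_en])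
  define K0 where "K0 = Suc (Max (idx ` {\<xi>::int^'n. sidx \<xi> \<le> J}))"
  show ?thesis
  proof (intro exI[of _ K0] allI impI subsetI)
    fix K \<xi> assume K: "K0 \<le> K" and xi: "\<xi> \<in> {\<xi>::int^'n. sidx \<xi> \<le> J}"
    have "idx \<xi> \<le> Max (idx ` {\<xi>::int^'n. sidx \<xi> \<le> J})"
      using xi finite_SK by (intro Max_ge) auto
    then have "idx \<xi> < K" using K by (simp add: K0_def)
    then show "\<xi> \<in> en ` {..<K}" using idx[of \<xi>] by (metis image_eqI lessThan_iff)
  qed
qed



theorem nuclear_exists:
  fixes a :: "int^'n \<Rightarrow> complex"
  assumes p: "p > 1" and q: "q > 0" and r: "r > 0" and C: "C \<ge> 0"
    and aC: "\<forall>\<xi>. norm (a \<xi>) \<le> C * (jbr \<xi>) powr m"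
    and mr: "m * r < - real CARD('n)" and m: "m \<le> - real CARD('n)"
  shows "r_nuclear r (besov_space w p q) (besov_norm w p q) (fourier_mult a)"
proof -
  let ?E = "besov_space w p q :: (int^'n \<Rightarrow> complex) set" and ?N = "besov_norm w p q :: (int^'n \<Rightarrow> complex) \<Rightarrow> real"
  have p0: "p > 0" using p by simp
  define e where "e k = (\<lambda>u::int^'n \<Rightarrow> complex. a (en k) * u (en k))" for k
  define y :: "nat \<Rightarrow> int^'n \<Rightarrow> complex" where "y k = chi (en k)" for k
  define Dc where "Dc = 8 ^ CARD('n) * C"
  have Dc0: "Dc \<ge> 0" using C by (simp add: Dc_def)
  have eE: "e k \<in> dual_space ?E ?N" for k
  proof -
    have bnd: "norm (e k u) \<le> (norm (a (en k)) * cw w (en k :: int^'n)) * ?N u" if "u \<in> ?E" for u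
    proof -
      have "norm (u (en k)) \<le> cw w (en k :: int^'n) * ?N u" by (rule coef_E[OF p q that])
      then have "norm (a (en k)) * norm (u (en k)) \<le> norm (a (en k)) * (cw w (en k :: int^'n) * ?N u)"
        by (rule mult_left_mono) simp
      then show ?thesis by (simp add: e_def norm_mult mult_ac)
    qed
    have lin1: "\<forall>u\<in>?E. \<forall>v\<in>?E. e k (\<lambda>t. u t + v t) = e k u + e k v"
      by (simp add: e_def algebra_simps)
    have lin2: "\<forall>u\<in>?E. \<forall>c. e k (\<lambda>t. c * u t) = c * e k u"
      by (simp add: e_def algebra_simps)
    have "\<exists>B. \<forall>u\<in>?E. norm (e k u) \<le> B * ?N u"
      using bnd by blast
    then show ?thesis unfolding dual_space_def using lin1 lin2 by blast
  qed
  have dn: "dual_norm ?E ?N (e k) \<le> norm (a (en k)) * cw w (en k :: int^'n)" for k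
    unfolding dual_norm_def
  proof (rule cSup_least)
    show "{norm (e k u) |u. u \<in> ?E \<and> ?N u \<le> 1} \<noteq> {}"
    proof -
      have z0: "(\<lambda>\<xi>::int^'n. 0::complex) \<in> ?E" by (rule besov_zero[OF p0 q])
      have N0: "?N (\<lambda>\<xi>::int^'n. 0::complex) = 0" by (rule besov_norm_zero[OF p0 q])
      have "norm (e k (\<lambda>\<xi>. 0)) \<in> {norm (e k u) |u. u \<in> ?E \<and> ?N u \<le> 1}"
        by (intro CollectI exI[of _ "\<lambda>\<xi>::int^'n. 0::complex"]) (simp add: z0 N0)
      then show ?thesis by blast
    qed
  next
    fix x assume "x \<in> {norm (e k u) |u. u \<in> ?E \<and> ?N u \<le> 1}"
    then obtain u where u: "u \<in> ?E" "?N u \<le> 1" and x: "x = norm (e k u)" by blast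
    have "x \<le> norm (a (en k)) * (cw w (en k :: int^'n) * ?N u)"
      using coef_E[OF p q u(1), of "en k"] by (simp add: x e_def norm_mult mult_left_mono)
    also have "\<dots> \<le> norm (a (en k)) * (cw w (en k :: int^'n) * 1)"
      using u(2) cw_pos[of w "en k :: int^'n"] by (intro mult_left_mono) auto
    finally show "x \<le> norm (a (en k)) * cw w (en k :: int^'n)" by simp
  qed
  have yE: "y k \<in> ?E" for k unfolding y_def by (rule chi_E[OF p0 q])
  have term_bd: "dual_norm ?E ?N (e k) powr r * ?N (y k) powr r \<le> C powr r * jbr (en k :: int^'n) powr (m * r)" for k
  proof -
    have d0: "dual_norm ?E ?N (e k) \<ge> 0" by (rule dual_norm_nonneg[OF p q eE])
    have Ny: "?N (y k) = 2 powr (real (sidx (en k :: int^'n)) * w)" unfolding y_def by (rule chi_norm[OF p0 q])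
    have "dual_norm ?E ?N (e k) * ?N (y k) \<le> norm (a (en k)) * cw w (en k :: int^'n) * 2 powr (real (sidx (en k :: int^'n)) * w)"
      using dn[of k] by (simp add: Ny mult_right_mono)
    also have "\<dots> = norm (a (en k))"
      by (simp add: cw_def powr_add[symmetric])
    finally have le: "dual_norm ?E ?N (e k) * ?N (y k) \<le> norm (a (en k))" .
    have "dual_norm ?E ?N (e k) powr r * ?N (y k) powr r = (dual_norm ?E ?N (e k) * ?N (y k)) powr r"
      using d0 by (simp add: powr_mult besov_norm_nonneg)
    also have "\<dots> \<le> norm (a (en k)) powr r"
      using le r d0 by (intro powr_mono2) (auto simp: besov_norm_nonneg)
    also have "\<dots> \<le> (C * jbr (en k :: int^'n) powr m) powr r"
      using aC r by (intro powr_mono2) auto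
    also have "\<dots> = C powr r * jbr (en k :: int^'n) powr (m * r)"
      using C by (simp add: powr_mult powr_powr jbr_pos)
    finally show ?thesis .
  qed
  have summ: "summable (\<lambda>k. dual_norm ?E ?N (e k) powr r * ?N (y k) powr r)"
  proof (rule summable_comparison_test)
    show "\<exists>N. \<forall>n\<ge>N. norm (dual_norm ?E ?N (e n) powr r * ?N (y n) powr r) \<le> C powr r * jbr (en n :: int^'n) powr (m * r)"
      using term_bd by (auto intro!: exI[of _ 0])
    have "(\<lambda>\<xi>::int^'n. C powr r * jbr \<xi> powr (m * r)) summable_on UNIV"
      by (intro summable_on_cmult_right jbr_powr_summable mr)
    then have "(\<lambda>k. C powr r * jbr (en k :: int^'n) powr (m * r)) summable_on UNIV"
      using summable_on_reindex_bij_betw[OF bij_en[where 'n='n], of "\<lambda>\<xi>::int^'n. C powr r * jbr \<xi> powr (m * r)"] by simp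
    then show "summable (\<lambda>k. C powr r * jbr (en k :: int^'n) powr (m * r))"
      by (subst summable_on_UNIV_nonneg_real_iff[symmetric]) auto
  qed
  have conv: "fourier_mult a u \<in> ?E \<and> (\<lambda>K. ?N (\<lambda>t. fourier_mult a u t - (\<Sum>k<K. e k u * y k t))) \<longlonglongrightarrow> 0"
    if uE: "u \<in> ?E" for u
  proof -
    have su: "summable (besov_term w p q u)" using uE by (simp add: besov_space_def)
    have gen: "g \<in> ?E \<and> besov_term w p q g j \<le> Dc powr q * besov_term w p q u j"
      if "\<And>\<xi>. norm (g \<xi>) \<le> norm (a \<xi>) * norm (u \<xi>)" for g j
    proof -
      have bd: "besov_term w p q g j \<le> Dc powr q * besov_term w p q u j" for j
        unfolding Dc_def by (rule mult_term_bound[OF p q C aC m that])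
      have "summable (besov_term w p q g)"
        by (rule summable_comparison_test[OF _ summable_mult[OF su, of "Dc powr q"]])
           (auto intro!: exI[of _ 0] simp: abs_of_nonneg besov_term_nonneg bd)
      then show ?thesis using bd by (simp add: besov_space_def)
    qed
    have TuE: "fourier_mult a u \<in> ?E"
      using gen[of "fourier_mult a u" 0] by (simp add: fourier_mult_def norm_mult)
    define D where "D K = (\<lambda>t. fourier_mult a u t - (\<Sum>k<K. e k u * y k t))" for K
    have Deq: "D K t = (if t \<in> en ` {..<K} then 0 else a t * u t)" for K t
      using partial_sum_en[where K=K and t=t and a=a and u=u] by (simp add: D_def e_def y_def fourier_mult_def)
    have Dbd: "norm (D K \<xi>) \<le> norm (a \<xi>) * norm (u \<xi>)" for K \<xi>
      by (simp add: Deq norm_mult)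
    have DE: "D K \<in> ?E" for K using gen[OF Dbd[of K]] by blast
    have tailE: "tailf J u \<in> ?E" for J by (rule tail_E[OF p0 q uE])
    have key: "\<exists>K0. \<forall>K\<ge>K0. ?N (D K) \<le> Dc * ?N (tailf J u)" for J
    proof -
      obtain K0 where K0: "\<And>K. K \<ge> K0 \<Longrightarrow> {\<xi>::int^'n. sidx \<xi> \<le> J} \<subseteq> en ` {..<K}"
        using cover_en[of J] by blast
      have "?N (D K) \<le> Dc * ?N (tailf J u)" if K: "K \<ge> K0" for K
      proof -
        have tb: "besov_term w p q (D K) j \<le> Dc powr q * besov_term w p q (tailf J u) j" for j
        proof (cases "j \<le> J")
          case True
          have "besov_term w p q (D K) j = 0"
          proof (rule besov_term_zero_block[OF _ p0 q])
            fix \<xi> :: "int^'n" assume "\<xi> \<in> shell j"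
            then have "sidx \<xi> \<le> J" using True by (simp add: shell_iff)
            then have "\<xi> \<in> en ` {..<K}" using K0[OF K] by blast
            then show "D K \<xi> = 0" by (simp add: Deq)
          qed
          then show ?thesis using Dc0 by (simp add: besov_term_nonneg)
        next
          case False
          then show ?thesis
            using gen[OF Dbd[of K], of j] by (simp add: term_tail[OF p0 q])
        qed
        have s1: "summable (besov_term w p q (D K))" using DE by (simp add: besov_space_def)
        have s2: "summable (besov_term w p q (tailf J u))" using tailE by (simp add: besov_space_def)
        have "suminf (besov_term w p q (D K)) \<le> suminf (\<lambda>j. Dc powr q * besov_term w p q (tailf J u) j)"
          by (rule suminf_le[OF tb s1 summable_mult[OF s2]])
        also have "\<dots> = Dc powr q * suminf (besov_term w p q (tailf J u))"
          by (rule suminf_mult[OF s2])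
        finally have "?N (D K) \<le> (Dc powr q * suminf (besov_term w p q (tailf J u))) powr (1/q)"
          unfolding besov_norm_def using q
          by (intro powr_mono2) (auto intro!: suminf_nonneg s1 besov_term_nonneg)
        also have "\<dots> = Dc * ?N (tailf J u)"
          using Dc0 q by (simp add: besov_norm_def powr_mult powr_powr suminf_nonneg[OF s2] besov_term_nonneg)
        finally show ?thesis .
      qed
      then show ?thesis by blast
    qed
    have tl: "(\<lambda>J. Dc * ?N (tailf J u)) \<longlonglongrightarrow> 0"
      by (rule tendsto_mult_right_zero[OF N_tail_lim[OF p0 q uE]])
    have "(\<lambda>K. ?N (D K)) \<longlonglongrightarrow> 0"
    proof (rule LIMSEQ_I)
      fix \<epsilon> :: real assume \<epsilon>: "\<epsilon> > 0"
      have "eventually (\<lambda>J. Dc * ?N (tailf J u) < \<epsilon>) sequentially"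
        by (rule order_tendstoD(2)[OF tl \<epsilon>])
      then obtain J where J: "Dc * ?N (tailf J u) < \<epsilon>" by (auto simp: eventually_sequentially)
      obtain K0 where "\<forall>K\<ge>K0. ?N (D K) \<le> Dc * ?N (tailf J u)" using key[of J] by blast
      then show "\<exists>no. \<forall>n\<ge>no. norm (?N (D n) - 0) < \<epsilon>"
        using J by (auto intro!: exI[of _ K0] simp: besov_norm_nonneg)
    qed
    then show ?thesis using TuE by (simp add: D_def)
  qed
  have "nuclear_rep r ?E ?N (fourier_mult a) e y"
    unfolding nuclear_rep_def using eE yE summ conv by blast
  then show ?thesis unfolding r_nuclear_def by blast
qed



theorem corollary5p2:
  fixes a :: "int^'n \<Rightarrow> complex"
    and r \<alpha> C m p1 q1 :: real
  assumes "0 < r" "r \<le> 1"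
    and "0 < \<alpha>" "\<alpha> \<le> 1/2"
    and "\<forall>\<xi>. norm (a \<xi>) \<le> C * (jbr \<xi>) powr m"
    and "1 < p1" "p1 \<le> 2"
    and "q1 = 1 / (\<alpha> + 1 / (p1 / (p1 - 1)))"
    and "m < - real CARD('n) / r - \<alpha> * real CARD('n)"
  shows "\<forall>w::real.
           r_nuclear r (besov_space w p1 q1) (besov_norm w p1 q1) (fourier_mult a)
         \<and> a summable_on UNIV
         \<and> (\<forall>e y. nuclear_rep 1 (besov_space w p1 q1) (besov_norm w p1 q1) (fourier_mult a) e y
                  \<longrightarrow> (\<lambda>k. e k (y k)) sums (\<Sum>\<^sub>\<infinity>\<xi>. a \<xi>))"
proof -
  note r = assms(1) and r1 = assms(2) and al = assms(3) and aC = assms(5) and p = assms(6)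
    and q1def = assms(8) and mlt = assms(9)
  define n where "n = real CARD('n)"
  have n0: "n > 0" by (simp add: n_def)
  have C: "C \<ge> 0"
  proof -
    have "0 \<le> C * jbr (0::int^'n) powr m" using aC[rule_format, of 0] norm_ge_zero order_trans by blast
    moreover have "jbr (0::int^'n) powr m > 0" using jbr_pos[of "0::int^'n"] by simp
    ultimately show ?thesis by (simp add: zero_le_mult_iff)
  qed
  have q: "q1 > 0"
  proof -
    have "1 / (p1 / (p1 - 1)) > 0" using p by simp
    then have "\<alpha> + 1 / (p1 / (p1 - 1)) > 0" using al by linarith
    then show ?thesis using q1def by simp
  qed
  have "\<alpha> * n \<ge> 0" using al n0 by simp
  then have m1: "m < - n / r" using mlt by (simp add: n_def)
  then have mr: "m * r < - real CARD('n)" using r by (simp add: field_simps n_def)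
  have "n / r \<ge> n" using r r1 n0 by (simp add: field_simps mult_left_le)
  then have m: "m \<le> - real CARD('n)" using m1 by (simp add: n_def)
  have m': "m < - real CARD('n)" using m1 \<open>n / r \<ge> n\<close> by (simp add: n_def)
  have asum: "a summable_on UNIV" by (rule a_summable[OF aC m'])
  show ?thesis
  proof (intro allI conjI impI)
    fix w :: real
    show "r_nuclear r (besov_space w p1 q1) (besov_norm w p1 q1) (fourier_mult a)"
      by (rule nuclear_exists[OF p q r C aC mr m])
    show "a summable_on UNIV" by (rule asum)
    fix e y
    assume "nuclear_rep 1 (besov_space w p1 q1) (besov_norm w p1 q1) (fourier_mult a) e y"
    then show "(\<lambda>k. e k (y k)) sums (\<Sum>\<^sub>\<infinity>\<xi>. a \<xi>)"
      by (rule trace_formula[OF p q asum])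
  qed
qed


end
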